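(* Let $n \geq 2$ and let $I = \{i_1 < \cdots < i_k\} \subset [n-1]$ with $k \geq 1$. Then \[ \sum_J (-1)^d\, \partial_{e_{n-k-d}(x_1, \ldots, x_{n-1})}\, \mathrm{d}_{j_1} \cdots \mathrm{d}_{j_k} \Delta_n = 0, \] where the sum is over all subsets $J = \{j_1 < \cdots < j_k\} \subset [n-1]$ satisfying \[ 1 \leq i_1 \leq j_1 < i_2 \leq j_2 < i_3 \leq j_3 < \cdots < i_k \leq j_k < n, \] and $d = (j_1 - i_1) + \cdots + (j_k - i_k)$.
   Context: Work in $\mathbb{Q}[x_1, \ldots, x_n, \theta_1, \ldots, \theta_n]$ where the $x_i$ commute, the $\theta_i$ anticommute ($\theta_i\theta_j = -\theta_j\theta_i$), and $x_i$ commutes with $\theta_j$. $\Delta_n = \prod_{1 \leq i < j \leq n}(x_j - x_i)$. For a polynomial $g \in \mathbb{Q}[x_1,\ldots,x_n]$, $\partial_g$ is the differential operator obtained by substituting $\partial_{x_i}$ for $x_i$ in $g$. For $i \geq 1$, $\mathrm{d}_i = \sum_{j=1}^n \partial_{x_j}^i \theta_j$, i.e. $\mathrm{d}_i \omega = \sum_j \theta_j \,\partial_{x_j}^i \omega$ (left multiplication by $\theta_j$). $e_r(x_1, \ldots, x_m)$ is the elementary symmetric polynomial of degree $r$, with $e_0 = 1$ and $e_r = 0$ for $r < 0$ or $r > m$. *)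

theory Defs
  imports Complex_Main "HOL-Library.Poly_Mapping"
begin

(* Commutative polynomials in x_1, x_2, ... over Q: monomials are exponent
  vectors (nat \<Rightarrow>\<^sub>0 nat), a polynomial maps monomials to coefficients. *)
type_synonym xpoly = "(nat \<Rightarrow>\<^sub>0 nat) \<Rightarrow>\<^sub>0 rat"

(* Elements of Q[x, theta]: a function sending a finite set S = {s_1 < ... < s_m}
  to the x-polynomial coefficient of the ordered theta-monomial theta_{s_1}...theta_{s_m}. *)
type_synonym spoly = "nat set \<Rightarrow> xpoly"

definition X :: "nat \<Rightarrow> xpoly" where
  "X i = Poly_Mapping.single (Poly_Mapping.single i 1) 1"

definition Delta :: "nat \<Rightarrow> xpoly" where
  "Delta n = (\<Prod>i\<in>{1..n}. \<Prod>j\<in>{i<..n}. (X j - X i))"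

(* e_r(x_1,...,x_m), with e_r = 0 for r < 0 or r > m and e_0 = 1. *)
definition esym :: "int \<Rightarrow> nat \<Rightarrow> xpoly" where
  "esym r m = (if r < 0 then 0 else
     (\<Sum>T\<in>{T. T \<subseteq> {1..m} \<and> card T = nat r}. \<Prod>i\<in>T. X i))"

definition xderiv :: "nat \<Rightarrow> xpoly \<Rightarrow> xpoly" where
  "xderiv j p = (\<Sum>mo\<in>Poly_Mapping.keys p.
     Poly_Mapping.single (mo - Poly_Mapping.single j (1::nat))
       ((of_nat (Poly_Mapping.lookup mo j) :: rat) * Poly_Mapping.lookup p mo))"

definition mono_deriv :: "(nat \<Rightarrow>\<^sub>0 nat) \<Rightarrow> xpoly \<Rightarrow> xpoly" where
  "mono_deriv m p = foldr (\<lambda>i q. (xderiv i ^^ Poly_Mapping.lookup m i) q)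
                         (sorted_list_of_set (Poly_Mapping.keys m)) p"

definition diffop :: "xpoly \<Rightarrow> xpoly \<Rightarrow> xpoly" where
  "diffop g p = (\<Sum>m\<in>Poly_Mapping.keys g. Poly_Mapping.single 0 (Poly_Mapping.lookup g m) * mono_deriv m p)"

(* ... and on superspace polynomials (coefficientwise, x commutes with theta). *)
definition sdiffop :: "xpoly \<Rightarrow> spoly \<Rightarrow> spoly" where
  "sdiffop g \<omega> = (\<lambda>S. diffop g (\<omega> S))"

definition of_x :: "xpoly \<Rightarrow> spoly" where
  "of_x p = (\<lambda>S. if S = {} then p else 0)"

(* Left multiplication by theta_j. *)
definition theta_mul :: "nat \<Rightarrow> spoly \<Rightarrow> spoly" where
  "theta_mul j \<omega> = (\<lambda>S. if j \<in> S
      then (-1) ^ card {s\<in>S. s < j} * \<omega> (S - {j}) else 0)"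

definition dop :: "nat \<Rightarrow> nat \<Rightarrow> spoly \<Rightarrow> spoly" where
  "dop n i \<omega> = (\<lambda>S. \<Sum>j=1..n. theta_mul j (\<lambda>T. (xderiv j ^^ i) (\<omega> T)) S)"

(* d_{j 1} d_{j 2} ... d_{j k} applied to omega (d_{j k} acts first). *)
definition dops :: "nat \<Rightarrow> (nat \<Rightarrow> nat) \<Rightarrow> nat \<Rightarrow> spoly \<Rightarrow> spoly" where
  "dops n j k \<omega> = foldr (\<lambda>t w. dop n (j t) w) [1..<k+1] \<omega>"

(* Index sequences J interlacing I: i_1 \<le> j_1 < i_2 \<le> j_2 < ... < i_k \<le> j_k < n,
  represented as functions on {1..k}, extended by 0 elsewhere. *)
definition interlacing :: "nat \<Rightarrow> nat \<Rightarrow> (nat \<Rightarrow> nat) \<Rightarrow> (nat \<Rightarrow> nat) set" where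
  "interlacing n k i = {j. (\<forall>t\<in>{1..k}. i t \<le> j t) \<and>
                         (\<forall>t\<in>{1..<k}. j t < i (t+1)) \<and> j k < n \<and>
                         (\<forall>t. t \<notin> {1..k} \<longrightarrow> j t = 0)}"

end

theory Submission
  imports Defs "HOL-Library.Function_Algebras"
begin

lemma poly_expand: "(p::'a \<Rightarrow>\<^sub>0 'b::comm_monoid_add) = (\<Sum>m\<in>Poly_Mapping.keys p. Poly_Mapping.single m (Poly_Mapping.lookup p m))"
proof (rule poly_mapping_eqI)
  fix k
  have "(\<Sum>m\<in>Poly_Mapping.keys p. Poly_Mapping.lookup (Poly_Mapping.single m (Poly_Mapping.lookup p m)) k)
      = (\<Sum>m\<in>Poly_Mapping.keys p. if m = k then Poly_Mapping.lookup p m else 0)"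
    by (rule sum.cong) (auto simp: lookup_single when_def)
  also have "\<dots> = Poly_Mapping.lookup p k"
    by (simp add: sum.delta in_keys_iff)
  finally show "Poly_Mapping.lookup p k = Poly_Mapping.lookup (\<Sum>m\<in>Poly_Mapping.keys p. Poly_Mapping.single m (Poly_Mapping.lookup p m)) k"
    by (simp add: lookup_sum)
qed

definition addf :: "('a::ab_group_add \<Rightarrow> 'b::ab_group_add) \<Rightarrow> bool" where
  "addf f \<longleftrightarrow> (\<forall>x y. f (x + y) = f x + f y)"

lemma addfI: "(\<And>x y. f (x + y) = f x + f y) \<Longrightarrow> addf f"
  by (simp add: addf_def)

lemma addf_add: "addf f \<Longrightarrow> f (x + y) = f x + f y"
  by (simp add: addf_def)

lemma addf_0: "addf f \<Longrightarrow> f 0 = 0"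
  by (metis add.right_neutral add_left_cancel addf_def)

lemma addf_uminus: assumes "addf f" shows "f (- x) = - f x"
proof -
  have "f (-x) + f x = 0" using addf_add[OF assms, of "-x" x] addf_0[OF assms] by simp
  thus ?thesis by (simp add: eq_neg_iff_add_eq_0)
qed

lemma addf_diff: assumes "addf f" shows "f (x - y) = f x - f y"
  using addf_add[OF assms, of x "-y"] addf_uminus[OF assms, of y] by simp

lemma addf_sum: "addf f \<Longrightarrow> f (sum g A) = (\<Sum>a\<in>A. f (g a))"
  by (induction A rule: infinite_finite_induct) (auto simp: addf_0 addf_add)

lemma addf_comp: "addf f \<Longrightarrow> addf g \<Longrightarrow> addf (\<lambda>x. f (g x))"
  by (simp add: addf_def)

lemma addf_funpow: "addf (f::'a::ab_group_add \<Rightarrow> 'a) \<Longrightarrow> addf (f ^^ e)"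
  unfolding addf_def by (induction e) simp_all

lemma addf_id: "addf (\<lambda>x. x)" by (simp add: addf_def)

lemma addf_plus: "addf f \<Longrightarrow> addf g \<Longrightarrow> addf (\<lambda>x. f x + g x)"
  by (simp add: addf_def algebra_simps)

lemma addf_sumf: "(\<And>a. a \<in> A \<Longrightarrow> addf (f a)) \<Longrightarrow> addf (\<lambda>x. \<Sum>a\<in>A. f a x)"
  by (simp add: addf_def sum.distrib)

lemma lin_ext:
  fixes L L' :: "('a \<Rightarrow>\<^sub>0 'b::ab_group_add) \<Rightarrow> 'c::ab_group_add"
  assumes "addf L" "addf L'" "\<And>m c. L (Poly_Mapping.single m c) = L' (Poly_Mapping.single m c)"
  shows "L p = L' p"
proof -
  have "L p = L (\<Sum>m\<in>Poly_Mapping.keys p. Poly_Mapping.single m (Poly_Mapping.lookup p m))"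
    by (subst poly_expand) simp
  also have "\<dots> = L' (\<Sum>m\<in>Poly_Mapping.keys p. Poly_Mapping.single m (Poly_Mapping.lookup p m))"
    using assms by (simp add: addf_sum)
  also have "\<dots> = L' p" by (subst (2) poly_expand) simp
  finally show ?thesis .
qed

lemma lookup_minus_nat: "Poly_Mapping.lookup ((a::'x \<Rightarrow>\<^sub>0 nat) - b) i = Poly_Mapping.lookup a i - Poly_Mapping.lookup b i"
  by (simp add: lookup_minus)

lemma xderiv_gen:
  assumes "finite K" "Poly_Mapping.keys p \<subseteq> K"
  shows "xderiv j p = (\<Sum>mo\<in>K. Poly_Mapping.single (mo - Poly_Mapping.single j (1::nat))
       ((of_nat (Poly_Mapping.lookup mo j) :: rat) * Poly_Mapping.lookup p mo))"
  unfolding xderiv_def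
  by (rule sum.mono_neutral_left) (use assms in \<open>auto simp: in_keys_iff\<close>)

lemma addf_xderiv: "addf (xderiv j)"
proof (rule addfI)
  fix p q :: xpoly
  let ?K = "Poly_Mapping.keys p \<union> Poly_Mapping.keys q"
  have k: "Poly_Mapping.keys (p + q) \<subseteq> ?K" by (rule keys_add)
  show "xderiv j (p + q) = xderiv j p + xderiv j q"
    by (simp add: xderiv_gen[of ?K p] xderiv_gen[of ?K q] xderiv_gen[OF _ k] lookup_add
        distrib_left single_add sum.distrib)
qed

lemma xderiv_single: "xderiv j (Poly_Mapping.single a c) =
   Poly_Mapping.single (a - Poly_Mapping.single j 1) (of_nat (Poly_Mapping.lookup a j) * c)"
  by (simp add: xderiv_gen[of "{a}"])

definition ff :: "nat \<Rightarrow> nat \<Rightarrow> rat" where "ff x e = (\<Prod>t<e. of_nat (x - t))"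

lemma ff_0 [simp]: "ff x 0 = 1" by (simp add: ff_def)
lemma ff_Suc: "ff x (Suc e) = ff x e * of_nat (x - e)" by (simp add: ff_def)
lemma ff_1 [simp]: "ff x 1 = of_nat x" by (simp add: ff_def)

lemma ff_add: "ff x (e2 + e1) = ff x e2 * ff (x - e2) e1"
  by (induction e1) (simp_all add: ff_Suc)

lemma ff_zero: "x < e \<Longrightarrow> ff x e = 0"
  unfolding ff_def by (rule prod_zero) auto

lemma xderiv_pow_single: "(xderiv j ^^ e) (Poly_Mapping.single a c) =
   Poly_Mapping.single (a - Poly_Mapping.single j e) (c * ff (Poly_Mapping.lookup a j) e)"
proof (induction e)
  case 0 thus ?case by simp
next
  case (Suc e)
  have "a - Poly_Mapping.single j e - Poly_Mapping.single j 1 = a - Poly_Mapping.single j (Suc e)"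
    by (rule poly_mapping_eqI) (simp add: lookup_minus_nat lookup_single when_def)
  moreover have "Poly_Mapping.lookup (a - Poly_Mapping.single j e) j = Poly_Mapping.lookup a j - e"
    by (simp add: lookup_minus_nat)
  ultimately show ?case using Suc by (simp add: xderiv_single ff_Suc algebra_simps)
qed

definition ffm :: "(nat \<Rightarrow>\<^sub>0 nat) \<Rightarrow> (nat \<Rightarrow>\<^sub>0 nat) \<Rightarrow> rat" where
  "ffm a m = (\<Prod>i\<in>Poly_Mapping.keys m. ff (Poly_Mapping.lookup a i) (Poly_Mapping.lookup m i))"

lemma ffm_gen: "finite K \<Longrightarrow> Poly_Mapping.keys m \<subseteq> K \<Longrightarrow>
   ffm a m = (\<Prod>i\<in>K. ff (Poly_Mapping.lookup a i) (Poly_Mapping.lookup m i))"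
  unfolding ffm_def by (rule prod.mono_neutral_left) (auto simp: in_keys_iff)

lemma foldr_single:
  assumes "distinct L"
  shows "foldr (\<lambda>i q. (xderiv i ^^ Poly_Mapping.lookup m i) q) L (Poly_Mapping.single a c) =
    Poly_Mapping.single (a - (\<Sum>i\<in>set L. Poly_Mapping.single i (Poly_Mapping.lookup m i)))
       (c * (\<Prod>i\<in>set L. ff (Poly_Mapping.lookup a i) (Poly_Mapping.lookup m i)))"
  using assms
proof (induction L)
  case Nil thus ?case by simp
next
  case (Cons x L)
  let ?s = "\<Sum>i\<in>set L. Poly_Mapping.single i (Poly_Mapping.lookup m i)"
  have lx: "Poly_Mapping.lookup ?s x = 0" using Cons.prems
    by (auto simp: lookup_sum lookup_single when_def intro!: sum.neutral)
  have e1: "a - ?s - Poly_Mapping.single x (Poly_Mapping.lookup m x) =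
      a - (Poly_Mapping.single x (Poly_Mapping.lookup m x) + ?s)"
    by (rule poly_mapping_eqI) (simp add: lookup_minus_nat lookup_add)
  have e2: "Poly_Mapping.lookup (a - ?s) x = Poly_Mapping.lookup a x"
    by (simp add: lookup_minus_nat lx)
  have "foldr (\<lambda>i q. (xderiv i ^^ Poly_Mapping.lookup m i) q) (x # L) (Poly_Mapping.single a c)
     = (xderiv x ^^ Poly_Mapping.lookup m x) (Poly_Mapping.single (a - ?s)
       (c * (\<Prod>i\<in>set L. ff (Poly_Mapping.lookup a i) (Poly_Mapping.lookup m i))))"
    using Cons by simp
  also have "\<dots> = Poly_Mapping.single (a - (Poly_Mapping.single x (Poly_Mapping.lookup m x) + ?s))
       (c * (\<Prod>i\<in>set L. ff (Poly_Mapping.lookup a i) (Poly_Mapping.lookup m i)) * ff (Poly_Mapping.lookup a x) (Poly_Mapping.lookup m x))"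
    by (simp only: xderiv_pow_single e1 e2)
  also have "\<dots> = Poly_Mapping.single (a - (\<Sum>i\<in>set (x # L). Poly_Mapping.single i (Poly_Mapping.lookup m i)))
       (c * (\<Prod>i\<in>set (x # L). ff (Poly_Mapping.lookup a i) (Poly_Mapping.lookup m i)))"
  proof -
    have h1: "(\<Sum>i\<in>set (x # L). Poly_Mapping.single i (Poly_Mapping.lookup m i)) = Poly_Mapping.single x (Poly_Mapping.lookup m x) + ?s"
      using Cons.prems by simp
    have h2: "(\<Prod>i\<in>set (x # L). ff (Poly_Mapping.lookup a i) (Poly_Mapping.lookup m i)) =
        ff (Poly_Mapping.lookup a x) (Poly_Mapping.lookup m x) * (\<Prod>i\<in>set L. ff (Poly_Mapping.lookup a i) (Poly_Mapping.lookup m i))"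
      using Cons.prems by simp
    have h3: "c * (\<Prod>i\<in>set L. ff (Poly_Mapping.lookup a i) (Poly_Mapping.lookup m i)) * ff (Poly_Mapping.lookup a x) (Poly_Mapping.lookup m x)
       = c * (ff (Poly_Mapping.lookup a x) (Poly_Mapping.lookup m x) * (\<Prod>i\<in>set L. ff (Poly_Mapping.lookup a i) (Poly_Mapping.lookup m i)))"
      by (simp only: mult.assoc mult.commute[of "\<Prod>i\<in>set L. ff (Poly_Mapping.lookup a i) (Poly_Mapping.lookup m i)"])
    show ?thesis by (simp only: h1 h2 h3)
  qed
  finally show ?case .
qed

lemma mono_deriv_single: "mono_deriv m (Poly_Mapping.single a c) = Poly_Mapping.single (a - m) (c * ffm a m)"
proof -
  have "(\<Sum>i\<in>Poly_Mapping.keys m. Poly_Mapping.single i (Poly_Mapping.lookup m i)) = m"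
    by (rule poly_expand[symmetric])
  thus ?thesis unfolding mono_deriv_def
    by (simp add: foldr_single ffm_def)
qed

lemma addf_foldr: "(\<And>i. addf (f i)) \<Longrightarrow> addf (\<lambda>p. foldr f L p)"
  by (induction L) (auto simp: addf_def)

lemma addf_mono_deriv: "addf (mono_deriv m)"
  unfolding mono_deriv_def
  by (rule addf_foldr) (intro addf_funpow addf_xderiv)

lemma mono_deriv_expand: "mono_deriv m p = (\<Sum>a\<in>Poly_Mapping.keys p.
     Poly_Mapping.single (a - m) (Poly_Mapping.lookup p a * ffm a m))"
  by (subst poly_expand) (simp add: addf_sum[OF addf_mono_deriv] mono_deriv_single)

lemma diffop_gen: "finite K \<Longrightarrow> Poly_Mapping.keys g \<subseteq> K \<Longrightarrow>
  diffop g p = (\<Sum>m\<in>K. Poly_Mapping.single 0 (Poly_Mapping.lookup g m) * mono_deriv m p)"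
  unfolding diffop_def by (rule sum.mono_neutral_left) (auto simp: in_keys_iff)

lemma addf_smult: "addf (\<lambda>p::xpoly. Poly_Mapping.single 0 c * p)"
  by (rule addfI) (simp add: distrib_left)

lemma addf_diffop2: "addf (diffop g)"
  unfolding diffop_def
  by (rule addf_sumf) (rule addf_comp[OF addf_smult addf_mono_deriv])

lemma diffop_add1: "diffop (f + g) p = diffop f p + diffop g p"
proof -
  let ?K = "Poly_Mapping.keys f \<union> Poly_Mapping.keys g"
  have k: "Poly_Mapping.keys (f + g) \<subseteq> ?K" by (rule keys_add)
  show ?thesis
    by (simp add: diffop_gen[of ?K f] diffop_gen[of ?K g] diffop_gen[OF _ k] lookup_add
        distrib_right single_add sum.distrib)
qed

lemma addf_diffop1: "addf (\<lambda>g. diffop g p)"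
  by (rule addfI) (rule diffop_add1)

lemma diffop_single: "diffop (Poly_Mapping.single m c) p = Poly_Mapping.single 0 c * mono_deriv m p"
  by (simp add: diffop_gen[of "{m}"])

lemma smult_single: "Poly_Mapping.single 0 c * Poly_Mapping.single a d = Poly_Mapping.single a (c * d)"
  by (simp add: mult_single)

lemma diffop_single_single: "diffop (Poly_Mapping.single m c) (Poly_Mapping.single a d) =
   Poly_Mapping.single (a - m) (c * (d * ffm a m))"
  by (simp add: diffop_single mono_deriv_single smult_single)

lemma ffm_add: "ffm a (m1 + m2) = ffm a m2 * ffm (a - m2) m1"
proof -
  let ?K = "Poly_Mapping.keys m1 \<union> Poly_Mapping.keys m2"
  have k: "Poly_Mapping.keys (m1 + m2) \<subseteq> ?K" by (rule keys_add)
  have "ffm a (m1 + m2) = (\<Prod>i\<in>?K. ff (Poly_Mapping.lookup a i) (Poly_Mapping.lookup m2 i + Poly_Mapping.lookup m1 i))"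
    by (simp add: ffm_gen[OF _ k] lookup_add add.commute)
  also have "\<dots> = (\<Prod>i\<in>?K. ff (Poly_Mapping.lookup a i) (Poly_Mapping.lookup m2 i) *
          ff (Poly_Mapping.lookup (a - m2) i) (Poly_Mapping.lookup m1 i))"
    by (simp add: ff_add lookup_minus_nat)
  also have "\<dots> = ffm a m2 * ffm (a - m2) m1"
    by (simp add: prod.distrib ffm_gen[of ?K m1] ffm_gen[of ?K m2])
  finally show ?thesis .
qed

lemma diffop_mult_mono: "diffop (Poly_Mapping.single m1 c1 * Poly_Mapping.single m2 c2) (Poly_Mapping.single a d) =
   diffop (Poly_Mapping.single m1 c1) (diffop (Poly_Mapping.single m2 c2) (Poly_Mapping.single a d))"
proof -
  have e: "a - (m1 + m2) = a - m2 - m1"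
    by (rule poly_mapping_eqI) (simp add: lookup_minus_nat lookup_add)
  show ?thesis
  proof -
    have c: "c1 * c2 * (d * (ffm a m2 * ffm (a - m2) m1)) = c1 * (c2 * (d * ffm a m2) * ffm (a - m2) m1)"
      by (simp add: mult_ac)
    show ?thesis by (simp only: mult_single diffop_single_single ffm_add e c)
  qed
qed

lemma diffop_mult: "diffop (f * g) p = diffop f (diffop g p)"
proof -
  have s2: "diffop (Poly_Mapping.single m1 c1 * Poly_Mapping.single m2 c2) p =
      diffop (Poly_Mapping.single m1 c1) (diffop (Poly_Mapping.single m2 c2) p)" for m1 c1 m2 c2 p
  proof -
    have "(diffop (Poly_Mapping.single m1 c1 * Poly_Mapping.single m2 c2)) p =
      (\<lambda>p. diffop (Poly_Mapping.single m1 c1) (diffop (Poly_Mapping.single m2 c2) p)) p"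
      by (rule lin_ext) (auto intro: addf_diffop2 addf_comp simp: diffop_mult_mono)
    thus ?thesis by simp
  qed
  have s3: "diffop (Poly_Mapping.single m1 c1 * g) p = diffop (Poly_Mapping.single m1 c1) (diffop g p)" for m1 c1 g
  proof -
    show ?thesis
    proof (rule lin_ext[of "\<lambda>g. diffop (Poly_Mapping.single m1 c1 * g) p" "\<lambda>g. diffop (Poly_Mapping.single m1 c1) (diffop g p)", simplified])
      show "addf (\<lambda>g. diffop (Poly_Mapping.single m1 c1 * g) p)"
        by (rule addfI) (simp add: distrib_left diffop_add1)
      show "addf (\<lambda>g. diffop (Poly_Mapping.single m1 c1) (diffop g p))"
        by (rule addf_comp[OF addf_diffop2 addf_diffop1])
    qed (simp add: s2)
  qed
  show ?thesis
  proof (rule lin_ext[of "\<lambda>f. diffop (f * g) p" "\<lambda>f. diffop f (diffop g p)", simplified])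
    show "addf (\<lambda>f. diffop (f * g) p)"
      by (rule addfI) (simp add: distrib_right diffop_add1)
    show "addf (\<lambda>f. diffop f (diffop g p))"
      by (rule addf_diffop1)
  qed (simp add: s3)
qed

lemma mono_deriv_0: "mono_deriv 0 p = p"
proof -
  have "mono_deriv 0 p = (\<Sum>a\<in>Poly_Mapping.keys p. Poly_Mapping.single a (Poly_Mapping.lookup p a))"
    by (simp add: mono_deriv_expand ffm_def)
  also have "\<dots> = p" by (rule poly_expand[symmetric])
  finally show ?thesis .
qed

lemma diffop_one: "diffop 1 p = p"
  using diffop_single[of 0 1 p] mono_deriv_0[of p] by simp

lemma diffop_zero1 [simp]: "diffop 0 p = 0"
  by (simp add: diffop_def)

lemma diffop_zero2 [simp]: "diffop g 0 = 0"
  by (rule addf_0[OF addf_diffop2])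

lemma diffop_smult0: "diffop (Poly_Mapping.single 0 c) p = Poly_Mapping.single 0 c * p"
  by (simp add: diffop_single mono_deriv_0)

lemma diffop_X: "diffop (X j) p = xderiv j p"
proof -
  have "(diffop (X j)) p = (xderiv j) p"
  proof (rule lin_ext[OF addf_diffop2 addf_xderiv])
    fix a c
    have "ffm a (Poly_Mapping.single j 1) = of_nat (Poly_Mapping.lookup a j)"
      using ff_1 by (simp add: ffm_def)
    thus "diffop (X j) (Poly_Mapping.single a c) = xderiv j (Poly_Mapping.single a c)"
      by (simp add: X_def diffop_single_single xderiv_single mult.commute)
  qed
  thus ?thesis .
qed

lemma diffop_pow: "diffop (g ^ e) p = (diffop g ^^ e) p"
  by (induction e arbitrary: p) (simp_all add: diffop_one diffop_mult)

lemma diffop_X_pow: "diffop (X j ^ e) p = (xderiv j ^^ e) p"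
proof -
  have "diffop (X j) = xderiv j" by (rule ext) (rule diffop_X)
  thus ?thesis by (simp add: diffop_pow)
qed

lemma diffop_comm: "diffop f (diffop g p) = diffop g (diffop f p)"
  by (simp add: diffop_mult[symmetric] mult.commute)

lemma diffop_uminus1: "diffop (- g) p = - diffop g p"
  by (rule addf_uminus[OF addf_diffop1])
lemma diffop_diff1: "diffop (f - g) p = diffop f p - diffop g p"
  by (rule addf_diff[OF addf_diffop1])
lemma diffop_sum1: "diffop (sum f A) p = (\<Sum>a\<in>A. diffop (f a) p)"
  by (rule addf_sum[OF addf_diffop1])
lemma diffop_add2: "diffop g (p + q) = diffop g p + diffop g q"
  by (rule addf_add[OF addf_diffop2])
lemma diffop_uminus2: "diffop g (- p) = - diffop g p"
  by (rule addf_uminus[OF addf_diffop2])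
lemma diffop_diff2: "diffop g (p - q) = diffop g p - diffop g q"
  by (rule addf_diff[OF addf_diffop2])
lemma diffop_sum2: "diffop g (sum f A) = (\<Sum>a\<in>A. diffop g (f a))"
  by (rule addf_sum[OF addf_diffop2])

lemma xderiv_diffop_comm: "xderiv j (diffop g p) = diffop g (xderiv j p)"
  by (metis diffop_X diffop_comm)

lemma xderiv_pow_diffop_comm: "(xderiv j ^^ e) (diffop g p) = diffop g ((xderiv j ^^ e) p)"
  by (metis diffop_X_pow diffop_comm)

lemma diffop_expand: "diffop g p = (\<Sum>m\<in>Poly_Mapping.keys g. \<Sum>a\<in>Poly_Mapping.keys p.
    Poly_Mapping.single (a - m) (Poly_Mapping.lookup g m * (Poly_Mapping.lookup p a * ffm a m)))"
  unfolding diffop_def mono_deriv_expand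
  by (simp add: sum_distrib_left smult_single)

definition esymS :: "nat \<Rightarrow> nat set \<Rightarrow> xpoly" where
  "esymS r T = (\<Sum>U\<in>{U. U \<subseteq> T \<and> card U = r}. \<Prod>i\<in>U. X i)"

lemma esym_eq: "esym r m = (if r < 0 then 0 else esymS (nat r) {1..m})"
  by (simp add: esym_def esymS_def)

lemma esymS_0: assumes "finite T" shows "esymS 0 T = 1"
proof -
  have "{U. U \<subseteq> T \<and> card U = 0} = {{}}"
    using assms by (auto dest: finite_subset)
  thus ?thesis by (simp add: esymS_def)
qed

lemma esymS_big: assumes "finite T" "card T < r" shows "esymS r T = 0"
proof -
  have "{U. U \<subseteq> T \<and> card U = r} = {}"
  proof -
    have False if "U \<subseteq> T" "card U = r" for U
      using card_mono[OF assms(1) that(1)] that(2) assms(2) by simp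
    thus ?thesis by blast
  qed
  thus ?thesis by (simp only: esymS_def sum.empty)
qed

lemma esymS_insert:
  assumes fT: "finite T" and vT: "v \<notin> T"
  shows "esymS (Suc r) (insert v T) = esymS (Suc r) T + X v * esymS r T"
proof -
  let ?A = "{U. U \<subseteq> T \<and> card U = Suc r}"
  let ?C = "{U. U \<subseteq> T \<and> card U = r}"
  have finA: "finite ?A" using fT by (intro finite_subset[of ?A "Pow T"]) auto
  have finC: "finite ?C" using fT by (intro finite_subset[of ?C "Pow T"]) auto
  have split: "{U. U \<subseteq> insert v T \<and> card U = Suc r} = ?A \<union> insert v ` ?C"
  proof (intro set_eqI iffI)
    fix U assume U: "U \<in> {U. U \<subseteq> insert v T \<and> card U = Suc r}"
    hence fU: "finite U" using fT by (auto dest: finite_subset)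
    show "U \<in> ?A \<union> insert v ` ?C"
    proof (cases "v \<in> U")
      case True
      have "U = insert v (U - {v})" using True by blast
      moreover have "U - {v} \<in> ?C" using U True fU by auto
      ultimately show ?thesis by blast
    next
      case False
      thus ?thesis using U by blast
    qed
  next
    fix U assume "U \<in> ?A \<union> insert v ` ?C"
    thus "U \<in> {U. U \<subseteq> insert v T \<and> card U = Suc r}"
    proof
      assume "U \<in> ?A" thus ?thesis by auto
    next
      assume "U \<in> insert v ` ?C"
      then obtain U' where U': "U' \<in> ?C" "U = insert v U'" by blast
      have "finite U'" using U' fT by (auto dest: finite_subset)
      moreover have "v \<notin> U'" using U' vT by blast
      ultimately show ?thesis using U' by auto
    qed
  qed
  have disj: "?A \<inter> insert v ` ?C = {}" using vT by blast
  have inj: "inj_on (insert v) ?C"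
  proof (rule inj_onI)
    fix U1 U2 assume a: "U1 \<in> ?C" "U2 \<in> ?C" "insert v U1 = insert v U2"
    have "v \<notin> U1" "v \<notin> U2" using a(1,2) vT by auto
    hence "U1 = insert v U1 - {v}" "U2 = insert v U2 - {v}" by auto
    thus "U1 = U2" using a(3) by simp
  qed
  have "esymS (Suc r) (insert v T) = esymS (Suc r) T + (\<Sum>U\<in>insert v ` ?C. \<Prod>i\<in>U. X i)"
    unfolding esymS_def split
    by (rule sum.union_disjoint) (use finA finC disj in auto)
  also have "(\<Sum>U\<in>insert v ` ?C. \<Prod>i\<in>U. X i) = (\<Sum>U\<in>?C. \<Prod>i\<in>insert v U. X i)"
    by (rule sum.reindex[OF inj, unfolded comp_def])
  also have "\<dots> = (\<Sum>U\<in>?C. X v * (\<Prod>i\<in>U. X i))"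
  proof (rule sum.cong[OF refl])
    fix U assume "U \<in> ?C"
    hence "finite U" "v \<notin> U" using fT vT by (auto dest: finite_subset)
    thus "(\<Prod>i\<in>insert v U. X i) = X v * (\<Prod>i\<in>U. X i)" by simp
  qed
  also have "\<dots> = X v * esymS r T"
    by (simp add: esymS_def sum_distrib_left)
  finally show ?thesis .
qed

lemma addf_sign: "addf (f::xpoly \<Rightarrow> xpoly) \<Longrightarrow> f ((-1) ^ r * q) = (-1) ^ r * f q"
  by (cases "even r") (simp_all add: addf_uminus)

definition Kp :: "nat set \<Rightarrow> xpoly \<Rightarrow> bool" where
  "Kp T p \<longleftrightarrow> (\<forall>r\<ge>1. diffop (esymS r T) p = 0)"

lemma Kp_diffop: "Kp T p \<Longrightarrow> Kp T (diffop g p)"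
  unfolding Kp_def by (metis diffop_comm diffop_zero2)

lemma Kp_xderiv_pow: "Kp T p \<Longrightarrow> Kp T ((xderiv j ^^ e) p)"
  by (metis Kp_diffop diffop_X_pow)

lemma Kp_xderiv: "Kp T p \<Longrightarrow> Kp T (xderiv j p)"
  by (metis Kp_diffop diffop_X)

lemma Kp_add: "Kp T p \<Longrightarrow> Kp T q \<Longrightarrow> Kp T (p + q)"
  unfolding Kp_def by (simp add: diffop_add2)

lemma Kp_zero: "Kp T 0"
  unfolding Kp_def by simp

lemma Kp_uminus: "Kp T p \<Longrightarrow> Kp T (- p)"
  unfolding Kp_def by (simp add: diffop_uminus2)

lemma Kp_sign: "Kp T p \<Longrightarrow> Kp T ((-1) ^ r * p)"
  by (cases "even r") (simp_all add: Kp_uminus)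

lemma Kp_sum: "(\<And>a. a \<in> A \<Longrightarrow> Kp T (f a)) \<Longrightarrow> Kp T (sum f A)"
  by (induction A rule: infinite_finite_induct) (auto simp: Kp_zero Kp_add)

lemma red:
  assumes fT: "finite T" and vT: "v \<notin> T" and K: "Kp (insert v T) p"
  shows "diffop (esymS r T) p = (-1) ^ r * (xderiv v ^^ r) p"
proof (induction r)
  case 0 thus ?case by (simp add: esymS_0[OF fT] diffop_one)
next
  case (Suc r)
  have "0 = diffop (esymS (Suc r) (insert v T)) p" using K unfolding Kp_def by simp
  also have "\<dots> = diffop (esymS (Suc r) T) p + xderiv v (diffop (esymS r T) p)"
    by (simp add: esymS_insert[OF fT vT] diffop_add1 diffop_mult diffop_X)
  also have "xderiv v (diffop (esymS r T) p) = (-1) ^ r * (xderiv v ^^ Suc r) p"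
    by (simp add: Suc addf_sign[OF addf_xderiv])
  finally show ?case by (simp add: eq_neg_iff_add_eq_0[symmetric])
qed

lemma red_last:
  assumes n: "n \<ge> 1" and K: "Kp {1..n} p"
  shows "diffop (esymS r {1..n-1}) p = (-1) ^ r * (xderiv n ^^ r) p"
proof -
  have "insert n {1..n-1} = {1..n}" using n by auto
  moreover have "n \<notin> {1..n-1}" using n by auto
  ultimately show ?thesis using red[of "{1..n-1}" n p r] K by simp
qed

lemma xderiv_n_n:
  assumes n: "n \<ge> 1" and K: "Kp {1..n} p"
  shows "(xderiv n ^^ n) p = 0"
proof -
  have "esymS n {1..n-1} = 0" by (rule esymS_big) (use n in auto)
  hence "(-1) ^ n * (xderiv n ^^ n) p = (0::xpoly)" using red_last[OF n K, of n] by simp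
  thus ?thesis by (cases "even n") simp_all
qed

lemma hsum_zero:
  assumes n: "n \<ge> 2" and l: "l \<in> {1..n-1}" and K: "Kp {1..n} p"
  shows "(\<Sum>a\<le>n-1. (xderiv n ^^ (n-1-a)) ((xderiv l ^^ a) p)) = 0"
proof -
  define T1 where "T1 = {1..n} - {l}"
  define R where "R = {1..n} - {l, n}"
  have fT1: "finite T1" and fR: "finite R" by (simp_all add: T1_def R_def)
  have i1: "insert l T1 = {1..n}" "l \<notin> T1" using l n by (auto simp: T1_def)
  have i2: "insert n R = T1" "n \<notin> R" using l n by (auto simp: T1_def R_def)
  have red1: "diffop (esymS r T1) p = (-1) ^ r * (xderiv l ^^ r) p" for r
    using red[OF fT1 i1(2)] K i1(1) by simp
  have claim: "diffop (esymS r R) p = (-1) ^ r * (\<Sum>a\<le>r. (xderiv n ^^ (r-a)) ((xderiv l ^^ a) p))" for r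
  proof (induction r)
    case 0 thus ?case by (simp add: esymS_0[OF fR] diffop_one)
  next
    case (Suc r)
    have "diffop (esymS (Suc r) T1) p = diffop (esymS (Suc r) R) p + xderiv n (diffop (esymS r R) p)"
      using esymS_insert[OF fR i2(2), of r] i2(1)
      by (simp add: diffop_add1 diffop_mult diffop_X)
    hence e: "diffop (esymS (Suc r) R) p = (-1) ^ Suc r * (xderiv l ^^ Suc r) p - xderiv n (diffop (esymS r R) p)"
      using red1[of "Suc r"] by (simp add: algebra_simps)
    have x: "xderiv n (\<Sum>a\<le>r. (xderiv n ^^ (r-a)) ((xderiv l ^^ a) p))
        = (\<Sum>a\<le>r. (xderiv n ^^ (Suc r-a)) ((xderiv l ^^ a) p))"
      by (simp add: addf_sum[OF addf_xderiv] Suc_diff_le)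
    have "(\<Sum>a\<le>Suc r. (xderiv n ^^ (Suc r-a)) ((xderiv l ^^ a) p)) =
        (\<Sum>a\<le>r. (xderiv n ^^ (Suc r-a)) ((xderiv l ^^ a) p)) + (xderiv l ^^ Suc r) p"
      by simp
    thus ?case using e x Suc by (simp add: addf_sign[OF addf_xderiv] algebra_simps)
  qed
  have "esymS (n-1) R = 0"
  proof (rule esymS_big[OF fR])
    have s: "{l, n} \<subseteq> {1..n}" and c: "card {l, n} = 2" using l n by auto
    have "card R = n - 2" unfolding R_def by (subst card_Diff_subset[OF _ s]) (simp_all add: c)
    thus "card R < n - 1" using n by simp
  qed
  hence "(-1) ^ (n-1) * (\<Sum>a\<le>n-1. (xderiv n ^^ (n-1-a)) ((xderiv l ^^ a) p)) = (0::xpoly)"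
    using claim[of "n-1"] by simp
  thus ?thesis by (cases "even (n-1)") simp_all
qed

definition tr :: "nat \<Rightarrow> nat \<Rightarrow> nat \<Rightarrow> nat" where
  "tr a b i = (if i = a then b else if i = b then a else i)"

lemma tr_tr [simp]: "tr a b (tr a b i) = i"
  by (simp add: tr_def)

lemma inj_tr: "inj (tr a b)"
  by (metis injI tr_tr)

lemma inj_on_tr: "inj_on (tr a b) A"
  by (rule inj_on_subset[OF inj_tr subset_UNIV])

lemma tr_image_tr [simp]: "tr a b ` tr a b ` A = A"
  by (simp add: image_image)

definition mswap :: "nat \<Rightarrow> nat \<Rightarrow> (nat \<Rightarrow>\<^sub>0 nat) \<Rightarrow> (nat \<Rightarrow>\<^sub>0 nat)" where
  "mswap a b m = Abs_poly_mapping (\<lambda>i. Poly_Mapping.lookup m (tr a b i))"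

lemma lookup_mswap: "Poly_Mapping.lookup (mswap a b m) i = Poly_Mapping.lookup m (tr a b i)"
proof -
  have "{i. Poly_Mapping.lookup m (tr a b i) \<noteq> 0} = tr a b ` {i. Poly_Mapping.lookup m i \<noteq> 0}"
    by (auto simp: image_iff) (metis tr_tr)
  hence "finite {i. Poly_Mapping.lookup m (tr a b i) \<noteq> 0}" by simp
  thus ?thesis by (simp add: mswap_def)
qed

lemma mswap_mswap [simp]: "mswap a b (mswap a b m) = m"
  by (rule poly_mapping_eqI) (simp add: lookup_mswap)

lemma inj_mswap: "inj (mswap a b)"
  by (metis injI mswap_mswap)

lemma mswap_add: "mswap a b (m1 + m2) = mswap a b m1 + mswap a b m2"
  by (rule poly_mapping_eqI) (simp add: lookup_mswap lookup_add)

lemma mswap_minus: "mswap a b (m1 - m2) = mswap a b m1 - mswap a b m2"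
  by (rule poly_mapping_eqI) (simp add: lookup_mswap lookup_minus_nat)

lemma mswap_single: "mswap a b (Poly_Mapping.single i e) = Poly_Mapping.single (tr a b i) e"
  by (rule poly_mapping_eqI) (auto simp: lookup_mswap lookup_single when_def)

lemma mem_tr_image: "(i \<in> tr a b ` K) = (tr a b i \<in> K)"
  by (metis imageE imageI tr_tr)

lemma mem_mswap_image: "(i \<in> mswap a b ` K) = (mswap a b i \<in> K)"
  by (metis imageE imageI mswap_mswap)

lemma keys_mswap: "Poly_Mapping.keys (mswap a b m) = tr a b ` Poly_Mapping.keys m"
  by (rule set_eqI) (simp add: mem_tr_image in_keys_iff lookup_mswap)

definition pswap :: "nat \<Rightarrow> nat \<Rightarrow> xpoly \<Rightarrow> xpoly" where
  "pswap a b p = Abs_poly_mapping (\<lambda>m. Poly_Mapping.lookup p (mswap a b m))"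

lemma lookup_pswap: "Poly_Mapping.lookup (pswap a b p) m = Poly_Mapping.lookup p (mswap a b m)"
proof -
  have "{m. Poly_Mapping.lookup p (mswap a b m) \<noteq> 0} = mswap a b ` {m. Poly_Mapping.lookup p m \<noteq> 0}"
    by (auto simp: image_iff) (metis mswap_mswap)
  hence "finite {m. Poly_Mapping.lookup p (mswap a b m) \<noteq> 0}" by simp
  thus ?thesis by (simp add: pswap_def)
qed

lemma pswap_pswap [simp]: "pswap a b (pswap a b p) = p"
  by (rule poly_mapping_eqI) (simp add: lookup_pswap)

lemma keys_pswap: "Poly_Mapping.keys (pswap a b p) = mswap a b ` Poly_Mapping.keys p"
  by (rule set_eqI) (simp add: mem_mswap_image in_keys_iff lookup_pswap)

lemma addf_pswap: "addf (pswap a b)"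
  by (rule addfI, rule poly_mapping_eqI) (simp add: lookup_pswap lookup_add)

lemma pswap_single: "pswap a b (Poly_Mapping.single m c) = Poly_Mapping.single (mswap a b m) c"
  by (rule poly_mapping_eqI) (auto simp: lookup_pswap lookup_single when_def)

lemma pswap_mult: "pswap a b (p * q) = pswap a b p * pswap a b q"
proof -
  have s1: "pswap a b (Poly_Mapping.single m c * q) = pswap a b (Poly_Mapping.single m c) * pswap a b q" for m c
  proof (rule lin_ext[of "\<lambda>q. pswap a b (Poly_Mapping.single m c * q)" "\<lambda>q. pswap a b (Poly_Mapping.single m c) * pswap a b q", simplified])
    show "addf (\<lambda>q. pswap a b (Poly_Mapping.single m c * q))"
      by (rule addfI) (simp add: distrib_left addf_add[OF addf_pswap])
    show "addf (\<lambda>q. pswap a b (Poly_Mapping.single m c) * pswap a b q)"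
      by (rule addfI) (simp add: distrib_left addf_add[OF addf_pswap])
  qed (simp add: mult_single pswap_single mswap_add)
  show ?thesis
  proof (rule lin_ext[of "\<lambda>p. pswap a b (p * q)" "\<lambda>p. pswap a b p * pswap a b q", simplified])
    show "addf (\<lambda>p. pswap a b (p * q))"
      by (rule addfI) (simp add: distrib_right addf_add[OF addf_pswap])
    show "addf (\<lambda>p. pswap a b p * pswap a b q)"
      by (rule addfI) (simp add: distrib_right addf_add[OF addf_pswap])
  qed (simp add: s1)
qed

lemma pswap_one [simp]: "pswap a b 1 = 1"
proof -
  have "pswap a b (Poly_Mapping.single 0 1) = Poly_Mapping.single 0 1"
    by (simp only: pswap_single) (rule arg_cong[where f="\<lambda>m. Poly_Mapping.single m 1"], rule poly_mapping_eqI, simp add: lookup_mswap)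
  thus ?thesis by simp
qed

lemma pswap_X: "pswap a b (X i) = X (tr a b i)"
  by (simp add: X_def pswap_single mswap_single)

lemma pswap_diff: "pswap a b (p - q) = pswap a b p - pswap a b q"
  by (rule addf_diff[OF addf_pswap])

lemma pswap_uminus: "pswap a b (- p) = - pswap a b p"
  by (rule addf_uminus[OF addf_pswap])

lemma pswap_prod: "pswap a b (\<Prod>i\<in>A. f i) = (\<Prod>i\<in>A. pswap a b (f i))"
  by (induction A rule: infinite_finite_induct) (simp_all add: pswap_mult)

lemma pswap_sum: "pswap a b (\<Sum>i\<in>A. f i) = (\<Sum>i\<in>A. pswap a b (f i))"
  by (rule addf_sum[OF addf_pswap])

lemma ffm_mswap: "ffm (mswap a b x) (mswap a b m) = ffm x m"
proof -
  have "ffm (mswap a b x) (mswap a b m) = (\<Prod>i\<in>tr a b ` Poly_Mapping.keys m.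
      ff (Poly_Mapping.lookup x (tr a b i)) (Poly_Mapping.lookup m (tr a b i)))"
    by (simp add: ffm_def keys_mswap lookup_mswap)
  also have "\<dots> = ffm x m"
    by (subst prod.reindex) (simp_all add: inj_on_tr ffm_def) 
  finally show ?thesis .
qed

lemma pswap_diffop: "pswap a b (diffop g p) = diffop (pswap a b g) (pswap a b p)"
proof -
  have s1: "pswap a b (diffop (Poly_Mapping.single m c) p) = diffop (pswap a b (Poly_Mapping.single m c)) (pswap a b p)" for m c
  proof (rule lin_ext[of "\<lambda>p. pswap a b (diffop (Poly_Mapping.single m c) p)" "\<lambda>p. diffop (pswap a b (Poly_Mapping.single m c)) (pswap a b p)", simplified])
    show "addf (\<lambda>p. pswap a b (diffop (Poly_Mapping.single m c) p))"
      by (rule addf_comp[OF addf_pswap addf_diffop2])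
    show "addf (\<lambda>p. diffop (pswap a b (Poly_Mapping.single m c)) (pswap a b p))"
      by (rule addf_comp[OF addf_diffop2 addf_pswap])
  qed (simp add: pswap_single diffop_single_single mswap_minus ffm_mswap)
  show ?thesis
  proof (rule lin_ext[of "\<lambda>g. pswap a b (diffop g p)" "\<lambda>g. diffop (pswap a b g) (pswap a b p)", simplified])
    show "addf (\<lambda>g. pswap a b (diffop g p))"
      by (rule addf_comp[OF addf_pswap addf_diffop1])
    show "addf (\<lambda>g. diffop (pswap a b g) (pswap a b p))"
      by (rule addf_comp[OF addf_diffop1 addf_pswap])
  qed (simp add: s1)
qed

lemma pswap_prod_X: "pswap a b (\<Prod>i\<in>U. X i) = (\<Prod>i\<in>tr a b ` U. X i)"
  by (simp add: pswap_prod pswap_X prod.reindex inj_on_tr)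

lemma pswap_esymS:
  assumes "tr a b ` T = T"
  shows "pswap a b (esymS r T) = esymS r T"
proof -
  have "pswap a b (esymS r T) = (\<Sum>U\<in>{U. U \<subseteq> T \<and> card U = r}. \<Prod>i\<in>tr a b ` U. X i)"
    by (simp add: esymS_def pswap_sum pswap_prod_X)
  also have "\<dots> = esymS r T"
  proof -
    have mem: "tr a b ` U \<in> {U. U \<subseteq> T \<and> card U = r}" if "U \<in> {U. U \<subseteq> T \<and> card U = r}" for U
    proof -
      have U: "U \<subseteq> T" "card U = r" using that by auto
      have "tr a b ` U \<subseteq> tr a b ` T" using U(1) by (rule image_mono)
      hence "tr a b ` U \<subseteq> T" using assms by simp
      moreover have "card (tr a b ` U) = r" using U(2) by (simp add: card_image inj_on_tr)
      ultimately show ?thesis by simp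
    qed
    show ?thesis unfolding esymS_def
      by (rule sum.reindex_bij_witness[where i="\<lambda>U. tr a b ` U" and j="\<lambda>U. tr a b ` U"])
        (simp_all only: mem tr_image_tr)
  qed
  finally show ?thesis .
qed

definition V :: "nat \<Rightarrow> xpoly" where "V m = (\<Prod>i\<in>{1..m}. (X (Suc m) - X i))"

lemma Delta_0: "Delta 0 = 1" by (simp add: Delta_def)

lemma Delta_Suc: "Delta (Suc m) = Delta m * V m"
proof -
  have e1: "{1..Suc m} = insert (Suc m) {1..m}" by auto
  have e2: "{i<..Suc m} = insert (Suc m) {i<..m}" if "i \<in> {1..m}" for i using that by auto
  have "Delta (Suc m) = (\<Prod>i\<in>{1..m}. \<Prod>j\<in>{i<..Suc m}. (X j - X i))"
    unfolding Delta_def e1 by simp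
  also have "\<dots> = (\<Prod>i\<in>{1..m}. (X (Suc m) - X i) * (\<Prod>j\<in>{i<..m}. (X j - X i)))"
    by (rule prod.cong[OF refl]) (simp add: e2)
  also have "\<dots> = Delta m * V m"
    by (simp add: prod.distrib Delta_def V_def mult.commute)
  finally show ?thesis .
qed

lemma tr_other: "i \<noteq> a \<Longrightarrow> i \<noteq> b \<Longrightarrow> tr a b i = i"
  by (simp add: tr_def)

lemma pswap_Delta_fix: "k < a \<Longrightarrow> k < b \<Longrightarrow> pswap a b (Delta k) = Delta k"
  unfolding Delta_def
  by (simp add: pswap_prod pswap_diff pswap_X tr_other)

lemma tr_image_interval: "a \<in> {1..m} \<Longrightarrow> b \<in> {1..m} \<Longrightarrow> tr a b ` {1..m} = {1..m}"
  by (rule set_eqI) (auto simp: mem_tr_image tr_def)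

lemma pswap_V_fix: assumes "a \<in> {1..m}" "b \<in> {1..m}" shows "pswap a b (V m) = V m"
proof -
  have "pswap a b (V m) = (\<Prod>i\<in>{1..m}. (X (Suc m) - X (tr a b i)))"
    unfolding V_def using assms by (simp add: pswap_prod pswap_diff pswap_X tr_other)
  also have "\<dots> = (\<Prod>i\<in>tr a b ` {1..m}. (X (Suc m) - X i))"
    by (simp add: prod.reindex inj_on_tr)
  also have "\<dots> = V m" by (simp only: tr_image_interval[OF assms] V_def)
  finally show ?thesis .
qed

lemma Delta_adj: "pswap (Suc k) (Suc (Suc k)) (Delta (Suc (Suc k))) = - Delta (Suc (Suc k))"
proof -
  define W where "W = (\<Prod>i\<in>{1..k}. (X (Suc (Suc k)) - X i))"
  have e1: "{1..Suc k} = insert (Suc k) {1..k}" by auto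
  have VS: "V (Suc k) = (X (Suc (Suc k)) - X (Suc k)) * W"
    unfolding V_def W_def e1 by simp
  have D: "Delta (Suc (Suc k)) = Delta k * V k * ((X (Suc (Suc k)) - X (Suc k)) * W)"
    by (simp add: Delta_Suc VS)
  have p1: "pswap (Suc k) (Suc (Suc k)) (Delta k) = Delta k" by (rule pswap_Delta_fix) auto
  have p2: "pswap (Suc k) (Suc (Suc k)) (V k) = W"
    unfolding V_def W_def by (simp add: pswap_prod pswap_diff pswap_X tr_other) (simp add: tr_def)
  have p3: "pswap (Suc k) (Suc (Suc k)) W = V k"
    unfolding V_def W_def by (simp add: pswap_prod pswap_diff pswap_X tr_other) (simp add: tr_def)
  have p4: "pswap (Suc k) (Suc (Suc k)) (X (Suc (Suc k)) - X (Suc k)) = - (X (Suc (Suc k)) - X (Suc k))"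
    by (simp add: pswap_diff pswap_X tr_def)
  have "pswap (Suc k) (Suc (Suc k)) (Delta (Suc (Suc k))) =
      Delta k * W * (- (X (Suc (Suc k)) - X (Suc k)) * V k)"
    unfolding D by (simp only: pswap_mult p1 p2 p3 p4)
  also have "\<dots> = - (Delta k * V k * ((X (Suc (Suc k)) - X (Suc k)) * W))"
    by (simp add: algebra_simps)
  finally show ?thesis unfolding D .
qed

lemma pswap_conj:
  assumes "a < m"
  shows "pswap a (Suc m) p = pswap m (Suc m) (pswap a m (pswap m (Suc m) p))"
proof (rule poly_mapping_eqI)
  fix mo
  have "mswap m (Suc m) (mswap a m (mswap m (Suc m) mo)) = mswap a (Suc m) mo"
    by (rule poly_mapping_eqI) (use assms in \<open>simp add: lookup_mswap tr_def\<close>)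
  thus "Poly_Mapping.lookup (pswap a (Suc m) p) mo =
      Poly_Mapping.lookup (pswap m (Suc m) (pswap a m (pswap m (Suc m) p))) mo"
    by (simp add: lookup_pswap)
qed

lemma Delta_anti:
  assumes "1 \<le> a" "a < b" "b \<le> n"
  shows "pswap a b (Delta n) = - Delta n"
  using assms
proof (induction n arbitrary: a b)
  case 0 thus ?case by simp
next
  case (Suc m)
  have low: "pswap a' b' (Delta (Suc m)) = - Delta (Suc m)" if "1 \<le> a'" "a' < b'" "b' \<le> m" for a' b'
  proof -
    have "pswap a' b' (V m) = V m" by (rule pswap_V_fix) (use that in auto)
    thus ?thesis using Suc.IH[OF that] by (simp add: Delta_Suc pswap_mult)
  qed
  show ?case
  proof (cases "b \<le> m")
    case True thus ?thesis using low Suc.prems by simp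
  next
    case False
    hence b: "b = Suc m" using Suc.prems by simp
    then obtain k where m: "m = Suc k" using Suc.prems by (cases m) auto
    have adj: "pswap m (Suc m) (Delta (Suc m)) = - Delta (Suc m)"
      unfolding m by (rule Delta_adj)
    show ?thesis
    proof (cases "a = m")
      case True thus ?thesis using adj b by simp
    next
      case False
      hence am: "a < m" using Suc.prems b by simp
      have "pswap a m (Delta (Suc m)) = - Delta (Suc m)" using low[of a m] Suc.prems am by simp
      thus ?thesis unfolding b pswap_conj[OF am]
        by (simp add: adj pswap_uminus)
    qed
  qed
qed

definition mdeg :: "(nat \<Rightarrow>\<^sub>0 nat) \<Rightarrow> nat" where
  "mdeg m = (\<Sum>i\<in>Poly_Mapping.keys m. Poly_Mapping.lookup m i)"

lemma mdeg_gen: "finite K \<Longrightarrow> Poly_Mapping.keys m \<subseteq> K \<Longrightarrow> mdeg m = (\<Sum>i\<in>K. Poly_Mapping.lookup m i)"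
  unfolding mdeg_def by (rule sum.mono_neutral_left) (auto simp: in_keys_iff)

lemma mdeg_add: "mdeg (a + b) = mdeg a + mdeg b"
proof -
  let ?K = "Poly_Mapping.keys a \<union> Poly_Mapping.keys b"
  have k: "Poly_Mapping.keys (a + b) \<subseteq> ?K" by (rule keys_add)
  show ?thesis by (simp add: mdeg_gen[OF _ k] mdeg_gen[of ?K a] mdeg_gen[of ?K b] lookup_add sum.distrib)
qed

lemma mdeg_zero [simp]: "mdeg 0 = 0" by (simp add: mdeg_def)

lemma mdeg_single: "mdeg (Poly_Mapping.single i e) = e"
  by (simp add: mdeg_def)

lemma mdeg_diff: assumes "\<And>i. Poly_Mapping.lookup m i \<le> Poly_Mapping.lookup a i"
  shows "mdeg (a - m) + mdeg m = mdeg a"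
proof -
  have "(a - m) + m = a"
    by (rule poly_mapping_eqI) (simp add: lookup_add lookup_minus_nat assms)
  thus ?thesis by (metis mdeg_add)
qed

definition homog :: "nat \<Rightarrow> xpoly \<Rightarrow> bool" where
  "homog D p \<longleftrightarrow> (\<forall>m\<in>Poly_Mapping.keys p. mdeg m = D)"

lemma homog_add: "homog D p \<Longrightarrow> homog D q \<Longrightarrow> homog D (p + q)"
  unfolding homog_def using keys_add[of p q] by (meson Un_iff subsetD)

lemma homog_uminus: "homog D p \<Longrightarrow> homog D (- p)"
  unfolding homog_def by simp

lemma homog_diff: "homog D p \<Longrightarrow> homog D q \<Longrightarrow> homog D (p - q)"
  using homog_add[of D p "-q"] homog_uminus[of D q] by simp

lemma homog_zero: "homog D 0" by (simp add: homog_def)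

lemma homog_sum: "(\<And>a. a \<in> A \<Longrightarrow> homog D (f a)) \<Longrightarrow> homog D (sum f A)"
  by (induction A rule: infinite_finite_induct) (auto simp: homog_zero homog_add)

lemma homog_mult: assumes "homog D1 p" "homog D2 q" shows "homog (D1 + D2) (p * q)"
  unfolding homog_def
proof
  fix m assume "m \<in> Poly_Mapping.keys (p * q)"
  then obtain a b where "m = a + b" "a \<in> Poly_Mapping.keys p" "b \<in> Poly_Mapping.keys q"
    using keys_mult[of p q] by blast
  thus "mdeg m = D1 + D2" using assms by (simp add: homog_def mdeg_add)
qed

lemma homog_one: "homog 0 1" by (simp add: homog_def)

lemma homog_prod: "(\<And>i. i \<in> A \<Longrightarrow> homog (d i) (f i)) \<Longrightarrow> homog (\<Sum>i\<in>A. d i) (\<Prod>i\<in>A. f i)"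
  by (induction A rule: infinite_finite_induct) (auto simp: homog_one homog_mult)

lemma homog_X: "homog 1 (X i)"
  by (simp add: homog_def X_def mdeg_single)

lemma homog_V: "homog m (V m)"
proof -
  have "homog (\<Sum>i\<in>{1..m}. 1) (V m)"
    unfolding V_def by (rule homog_prod) (intro homog_diff homog_X)
  thus ?thesis by simp
qed

lemma homog_Delta: "homog (\<Sum>i<n. i) (Delta n)"
proof (induction n)
  case 0 thus ?case by (simp add: Delta_0 homog_one)
next
  case (Suc m)
  show ?case using homog_mult[OF Suc homog_V[of m]] by (simp add: Delta_Suc)
qed

lemma homog_esymS: "homog r (esymS r T)"
  unfolding esymS_def
proof (rule homog_sum)
  fix U assume "U \<in> {U. U \<subseteq> T \<and> card U = r}"
  hence "card U = r" by simp
  moreover have "homog (\<Sum>i\<in>U. 1) (\<Prod>i\<in>U. X i)" by (rule homog_prod) (rule homog_X)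
  ultimately show "homog r (\<Prod>i\<in>U. X i)" by simp
qed

lemma ffm_nonzero_le: "ffm a m \<noteq> 0 \<Longrightarrow> Poly_Mapping.lookup m i \<le> Poly_Mapping.lookup a i"
proof (rule ccontr)
  assume a: "ffm a m \<noteq> 0" "\<not> Poly_Mapping.lookup m i \<le> Poly_Mapping.lookup a i"
  hence "i \<in> Poly_Mapping.keys m" by (auto simp: in_keys_iff)
  moreover have "ff (Poly_Mapping.lookup a i) (Poly_Mapping.lookup m i) = 0" using a(2) by (simp add: ff_zero)
  ultimately have "ffm a m = 0" unfolding ffm_def by (intro prod_zero) auto
  thus False using a(1) by simp
qed

lemma diffop_keys_deg:
  assumes p: "homog D p" and g: "homog r g" and r: "1 \<le> r" and m: "m \<in> Poly_Mapping.keys (diffop g p)"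
  shows "mdeg m < D"
proof -
  define S where "S mg a = Poly_Mapping.single (a - mg) (Poly_Mapping.lookup g mg * (Poly_Mapping.lookup p a * ffm a mg))" for mg a
  have "m \<in> Poly_Mapping.keys (\<Sum>mg\<in>Poly_Mapping.keys g. \<Sum>a\<in>Poly_Mapping.keys p. S mg a)"
    using m unfolding diffop_expand S_def .
  hence "m \<in> (\<Union>mg\<in>Poly_Mapping.keys g. Poly_Mapping.keys (\<Sum>a\<in>Poly_Mapping.keys p. S mg a))"
    using keys_sum[of "\<lambda>mg. \<Sum>a\<in>Poly_Mapping.keys p. S mg a" "Poly_Mapping.keys g"] by blast
  then obtain mg where mg: "mg \<in> Poly_Mapping.keys g" and m1: "m \<in> Poly_Mapping.keys (\<Sum>a\<in>Poly_Mapping.keys p. S mg a)"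
    by blast
  have "m \<in> (\<Union>a\<in>Poly_Mapping.keys p. Poly_Mapping.keys (S mg a))"
    using m1 keys_sum[of "S mg" "Poly_Mapping.keys p"] by blast
  then obtain a where a: "a \<in> Poly_Mapping.keys p" and mm: "m \<in> Poly_Mapping.keys (S mg a)"
    by blast
  have "m = a - mg" and nz: "ffm a mg \<noteq> 0" using mm by (auto simp: S_def split: if_splits)
  have "mdeg (a - mg) + mdeg mg = mdeg a" by (rule mdeg_diff) (rule ffm_nonzero_le[OF nz])
  moreover have "mdeg a = D" using p a by (simp add: homog_def)
  moreover have "mdeg mg = r" using g mg by (simp add: homog_def)
  ultimately show ?thesis using r \<open>m = a - mg\<close> by simp
qed

lemma sum_distinct_ge: "finite (A::nat set) \<Longrightarrow> (\<Sum>i<card A. i) \<le> \<Sum>A"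
proof (induction "card A" arbitrary: A)
  case 0 thus ?case by simp
next
  case (Suc c)
  hence ne: "A \<noteq> {}" by auto
  define M where "M = Max A"
  have MA: "M \<in> A" using Suc.prems ne by (simp add: M_def)
  have c: "card (A - {M}) = c" using Suc.hyps(2) MA Suc.prems by simp
  have IH: "(\<Sum>i<c. i) \<le> \<Sum>(A - {M})" using Suc.hyps(1)[of "A - {M}"] c Suc.prems by simp
  have "A \<subseteq> {0..M}" using Suc.prems by (auto simp: M_def)
  hence "card A \<le> Suc M" using card_mono[of "{0..M}" A] by simp
  hence cM: "c \<le> M" using Suc.hyps(2) by simp
  have "\<Sum>A = M + \<Sum>(A - {M})" using Suc.prems MA by (simp add: sum.remove)
  thus ?case using IH cM Suc.hyps(2)[symmetric] by simp
qed

lemma pigeon: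
  assumes "\<And>a b. 1 \<le> a \<Longrightarrow> a < b \<Longrightarrow> b \<le> n \<Longrightarrow> Poly_Mapping.lookup m a \<noteq> Poly_Mapping.lookup m b"
  shows "(\<Sum>i<n. i) \<le> mdeg m"
proof -
  have inj: "inj_on (Poly_Mapping.lookup m) {1..n}"
  proof (rule inj_onI, rule ccontr)
    fix x y assume xy: "x \<in> {1..n}" "y \<in> {1..n}" "Poly_Mapping.lookup m x = Poly_Mapping.lookup m y" "x \<noteq> y"
    show False
    proof (cases "x < y")
      case True thus False using assms[of x y] xy by auto
    next
      case False hence "y < x" using xy by simp
      thus False using assms[of y x] xy by auto
    qed
  qed
  let ?A = "Poly_Mapping.lookup m ` {1..n}"
  have cA: "card ?A = n" using card_image[OF inj] by simp
  have "(\<Sum>i<n. i) \<le> \<Sum>?A" using sum_distinct_ge[of ?A] cA by simp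
  also have "\<Sum>?A = (\<Sum>i\<in>{1..n}. Poly_Mapping.lookup m i)" using sum.reindex[OF inj, of "\<lambda>x. x"] by simp
  also have "\<dots> \<le> (\<Sum>i\<in>Poly_Mapping.keys m \<union> {1..n}. Poly_Mapping.lookup m i)"
    by (rule sum_mono2) auto
  also have "\<dots> = mdeg m" by (rule mdeg_gen[symmetric]) auto
  finally show ?thesis .
qed

lemma zero_lemma:
  assumes anti: "\<And>a b. 1 \<le> a \<Longrightarrow> a < b \<Longrightarrow> b \<le> n \<Longrightarrow> pswap a b q = - q"
    and deg: "\<And>m. m \<in> Poly_Mapping.keys q \<Longrightarrow> mdeg m < (\<Sum>i<n. i)"
  shows "q = 0"
proof (rule ccontr)
  assume "q \<noteq> 0"
  then obtain m where m: "m \<in> Poly_Mapping.keys q" by (metis keys_eq_empty all_not_in_conv)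
  have "\<not> (\<Sum>i<n. i) \<le> mdeg m" using deg[OF m] by simp
  then obtain a b where ab: "1 \<le> a" "a < b" "b \<le> n" "Poly_Mapping.lookup m a = Poly_Mapping.lookup m b"
    using pigeon[of n m] by blast
  have ms: "mswap a b m = m"
    by (rule poly_mapping_eqI) (simp add: lookup_mswap tr_def ab(4))
  have "Poly_Mapping.lookup q m = Poly_Mapping.lookup (pswap a b q) m"
    by (simp add: lookup_pswap ms)
  also have "\<dots> = - Poly_Mapping.lookup q m" using anti[OF ab(1-3)] by simp
  finally have "Poly_Mapping.lookup q m = 0" by simp
  thus False using m by (simp add: in_keys_iff)
qed

lemma K_Delta: "Kp {1..n} (Delta n)"
  unfolding Kp_def
proof (intro allI impI)
  fix r :: nat assume r: "1 \<le> r"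
  let ?q = "diffop (esymS r {1..n}) (Delta n)"
  show "?q = 0"
  proof (rule zero_lemma)
    fix a b assume ab: "1 \<le> a" "a < b" "b \<le> n"
    have "tr a b ` {1..n} = {1..n}" by (rule tr_image_interval) (use ab in auto)
    thus "pswap a b ?q = - ?q"
      by (simp add: pswap_diffop pswap_esymS Delta_anti[OF ab] diffop_uminus2)
  next
    fix m assume "m \<in> Poly_Mapping.keys ?q"
    thus "mdeg m < (\<Sum>i<n. i)" by (rule diffop_keys_deg[OF homog_Delta homog_esymS r])
  qed
qed

lemma sum_fun_apply: "(\<Sum>a\<in>A. f a) x = (\<Sum>a\<in>A. f a x)"
  by (induction A rule: infinite_finite_induct) auto

definition dn :: "nat \<Rightarrow> spoly \<Rightarrow> spoly" where "dn v \<omega> = (\<lambda>S. xderiv v (\<omega> S))"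

lemma dn_pow: "(dn v ^^ e) \<omega> = (\<lambda>S. (xderiv v ^^ e) (\<omega> S))"
  by (induction e) (auto simp: dn_def)

lemma addf_xderiv_pow: "addf (xderiv v ^^ e)"
  by (rule addf_funpow[OF addf_xderiv])

lemma addf_dn_pow: "addf (dn v ^^ e)"
  by (rule addfI) (simp add: dn_pow fun_eq_iff addf_add[OF addf_xderiv_pow])

lemma xderiv_pow_comm: "(xderiv a ^^ e) ((xderiv b ^^ f) p) = (xderiv b ^^ f) ((xderiv a ^^ e) p)"
  by (metis diffop_X_pow diffop_comm)

definition thop :: "nat \<Rightarrow> (nat \<Rightarrow> xpoly \<Rightarrow> xpoly) \<Rightarrow> spoly \<Rightarrow> spoly" where
  "thop n Q \<omega> = (\<lambda>S. \<Sum>l=1..n. theta_mul l (\<lambda>T. Q l (\<omega> T)) S)"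

lemma dop_thop: "dop n i \<omega> = thop n (\<lambda>l. xderiv l ^^ i) \<omega>"
  by (simp add: dop_def thop_def)

lemma theta_mul_addf: "addf (f::xpoly \<Rightarrow> xpoly) \<Longrightarrow> f (theta_mul l \<omega> S) = theta_mul l (\<lambda>T. f (\<omega> T)) S"
  by (simp add: theta_mul_def addf_sign addf_0)

lemma theta_mul_add: "theta_mul l (\<lambda>T. f T + g T) S = theta_mul l f S + theta_mul l g S"
  by (simp add: theta_mul_def distrib_left)

lemma theta_mul_sum: "theta_mul l (\<lambda>T. \<Sum>a\<in>A. F a T) S = (\<Sum>a\<in>A. theta_mul l (F a) S)"
  by (simp add: theta_mul_def sum_distrib_left)

lemma theta_mul_zero: "theta_mul l (\<lambda>T. 0) S = 0"
  by (simp add: theta_mul_def)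

lemma addf_thop: "(\<And>l. addf (Q l)) \<Longrightarrow> addf (thop n Q)"
  by (rule addfI) (simp add: thop_def fun_eq_iff addf_add theta_mul_add sum.distrib)

lemma dn_pow_thop: "(dn v ^^ e) (thop n Q \<omega>) = thop n (\<lambda>l p. (xderiv v ^^ e) (Q l p)) \<omega>"
  by (simp add: dn_pow thop_def addf_sum[OF addf_xderiv_pow] theta_mul_addf[OF addf_xderiv_pow])

lemma thop_dn_pow: "thop n Q ((dn v ^^ e) \<omega>) = thop n (\<lambda>l p. Q l ((xderiv v ^^ e) p)) \<omega>"
  by (simp add: dn_pow thop_def)

lemma dn_pow_dop_comm: "(dn v ^^ e) (dop n j \<omega>) = dop n j ((dn v ^^ e) \<omega>)"
  by (simp add: dop_thop dn_pow_thop thop_dn_pow xderiv_pow_comm)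

lemma addf_dop: "addf (dop n j)"
proof -
  have "addf (thop n (\<lambda>l. xderiv l ^^ j))" by (rule addf_thop) (rule addf_xderiv_pow)
  moreover have "dop n j = thop n (\<lambda>l. xderiv l ^^ j)" by (rule ext) (rule dop_thop)
  ultimately show ?thesis by simp
qed

definition Hq :: "nat \<Rightarrow> nat \<Rightarrow> nat \<Rightarrow> xpoly \<Rightarrow> xpoly" where
  "Hq n c l p = (\<Sum>a\<le>c. (xderiv n ^^ (c - a)) ((xderiv l ^^ a) p))"

definition Gop :: "nat \<Rightarrow> nat \<Rightarrow> spoly \<Rightarrow> spoly" where
  "Gop n c \<omega> = thop n (Hq n c) \<omega>"

lemma addf_Hq: "addf (Hq n c l)"
  unfolding Hq_def by (rule addf_sumf) (rule addf_comp[OF addf_xderiv_pow addf_xderiv_pow])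

lemma addf_Gop: "addf (Gop n c)"
proof -
  have "addf (thop n (Hq n c))" by (rule addf_thop) (rule addf_Hq)
  moreover have "Gop n c = thop n (Hq n c)" by (rule ext) (simp add: Gop_def)
  ultimately show ?thesis by simp
qed

lemma Gop_sum: "Gop n c \<omega> = (\<Sum>a\<le>c. (dn n ^^ (c - a)) (dop n a \<omega>))"
proof (rule ext)
  fix S
  have "(\<Sum>a\<le>c. (dn n ^^ (c - a)) (dop n a \<omega>)) S =
      (\<Sum>a\<le>c. \<Sum>l=1..n. theta_mul l (\<lambda>T. (xderiv n ^^ (c - a)) ((xderiv l ^^ a) (\<omega> T))) S)"
    by (simp only: sum_fun_apply dop_thop dn_pow_thop) (simp add: thop_def)
  also have "\<dots> = (\<Sum>l=1..n. \<Sum>a\<le>c. theta_mul l (\<lambda>T. (xderiv n ^^ (c - a)) ((xderiv l ^^ a) (\<omega> T))) S)"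
    by (rule sum.swap)
  also have "\<dots> = Gop n c \<omega> S"
    by (simp add: Gop_def thop_def Hq_def theta_mul_sum)
  finally show "Gop n c \<omega> S = (\<Sum>a\<le>c. (dn n ^^ (c - a)) (dop n a \<omega>)) S" by simp
qed

lemma Hq_comm: "(xderiv v ^^ e) (Hq n c l p) = Hq n c l ((xderiv v ^^ e) p)"
  by (simp add: Hq_def addf_sum[OF addf_xderiv_pow] xderiv_pow_comm)

lemma dn_pow_Gop_comm: "(dn v ^^ e) (Gop n c \<omega>) = Gop n c ((dn v ^^ e) \<omega>)"
  by (simp add: Gop_def dn_pow_thop thop_dn_pow Hq_comm)

definition sgc :: "nat set \<Rightarrow> nat \<Rightarrow> nat" where "sgc S l = card {s\<in>S. s < l}"

lemma theta_mul_sgc: "theta_mul l \<omega> S = (if l \<in> S then (-1) ^ sgc S l * \<omega> (S - {l}) else 0)"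
  by (simp add: theta_mul_def sgc_def)

lemma sgc_lt:
  assumes "l \<in> S" "l' \<in> S" "l < l'"
  shows "sgc (S - {l}) l' = sgc S l' - 1" "sgc S l' \<ge> 1" "sgc (S - {l'}) l = sgc S l"
proof -
  have fin: "finite {s\<in>S. s < l'}" by simp
  have e: "{s\<in>S. s < l'} = insert l {s\<in>S - {l}. s < l'}" using assms by auto
  have "sgc S l' = Suc (sgc (S - {l}) l')"
    unfolding sgc_def e by (subst card_insert_disjoint) auto
  thus "sgc (S - {l}) l' = sgc S l' - 1" "sgc S l' \<ge> 1" by simp_all
  have "{s\<in>S - {l'}. s < l} = {s\<in>S. s < l}" using assms by auto
  thus "sgc (S - {l'}) l = sgc S l" by (simp add: sgc_def)
qed

lemma sign_swap_lt:
  assumes "l \<in> S" "l' \<in> S" "l < l'"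
  shows "(-1::xpoly) ^ sgc S l * (-1) ^ sgc (S - {l}) l' = - ((-1) ^ sgc S l' * (-1) ^ sgc (S - {l'}) l)"
proof -
  obtain B where B: "sgc S l' = Suc B" using sgc_lt(2)[OF assms] by (cases "sgc S l'") auto
  show ?thesis using sgc_lt(1,3)[OF assms] B by (simp add: mult.commute)
qed

lemma sign_swap:
  assumes "l \<in> S" "l' \<in> S" "l \<noteq> l'"
  shows "(-1::xpoly) ^ sgc S l * (-1) ^ sgc (S - {l}) l' = - ((-1) ^ sgc S l' * (-1) ^ sgc (S - {l'}) l)"
proof (cases "l < l'")
  case True thus ?thesis using sign_swap_lt[OF assms(1,2)] by simp
next
  case False hence "l' < l" using assms by simp
  from sign_swap_lt[OF assms(2,1) this] show ?thesis by simp
qed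

lemma thop_thop_zero:
  assumes add: "\<And>l. addf (Q l)" and comm: "\<And>l l' p. Q l (Q l' p) = Q l' (Q l p)"
  shows "thop n Q (thop n Q \<omega>) = 0"
proof (rule ext)
  fix S
  define G where "G l l' = (if l \<in> S \<and> l' \<in> S \<and> l \<noteq> l' then
      (-1) ^ sgc S l * ((-1) ^ sgc (S - {l}) l' * Q l (Q l' (\<omega> (S - {l} - {l'})))) else 0)" for l l'
  have step: "theta_mul l (\<lambda>T. Q l (thop n Q \<omega> T)) S = (\<Sum>l'=1..n. G l l')" for l
  proof (cases "l \<in> S")
    case True
    have "theta_mul l (\<lambda>T. Q l (thop n Q \<omega> T)) S = (-1) ^ sgc S l *
        (\<Sum>l'=1..n. Q l (theta_mul l' (\<lambda>T. Q l' (\<omega> T)) (S - {l})))"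
      using True by (simp add: theta_mul_sgc thop_def addf_sum[OF add])
    also have "\<dots> = (\<Sum>l'=1..n. G l l')"
      unfolding sum_distrib_left
      by (rule sum.cong[OF refl]) (auto simp: G_def theta_mul_sgc True addf_sign[OF add] addf_0[OF add])
    finally show ?thesis .
  next
    case False thus ?thesis by (simp add: theta_mul_sgc G_def)
  qed
  have anti: "G l l' = - G l' l" for l l'
  proof (cases "l \<in> S \<and> l' \<in> S \<and> l \<noteq> l'")
    case True
    have e: "S - {l} - {l'} = S - {l'} - {l}" by auto
    have "G l l' = ((-1) ^ sgc S l * (-1) ^ sgc (S - {l}) l') * Q l (Q l' (\<omega> (S - {l} - {l'})))"
      using True by (simp add: G_def mult.assoc)
    also have "\<dots> = - (((-1) ^ sgc S l' * (-1) ^ sgc (S - {l'}) l) * Q l' (Q l (\<omega> (S - {l'} - {l}))))"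
    proof -
      have s: "(-1::xpoly) ^ sgc S l * (-1) ^ sgc (S - {l}) l' = - ((-1) ^ sgc S l' * (-1) ^ sgc (S - {l'}) l)"
        by (rule sign_swap) (use True in auto)
      have c: "Q l (Q l' (\<omega> (S - {l} - {l'}))) = Q l' (Q l (\<omega> (S - {l'} - {l})))"
        unfolding e by (rule comm)
      show ?thesis by (simp only: s c minus_mult_left)
    qed
    also have "\<dots> = - G l' l" using True by (simp add: G_def mult.assoc)
    finally show ?thesis .
  next
    case False thus ?thesis by (auto simp: G_def)
  qed
  have "thop n Q (thop n Q \<omega>) S = (\<Sum>l=1..n. theta_mul l (\<lambda>T. Q l (thop n Q \<omega> T)) S)"
    by (simp only: thop_def[of n Q "thop n Q \<omega>"])
  also have "\<dots> = (\<Sum>l=1..n. \<Sum>l'=1..n. G l l')"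
    by (simp only: step)
  finally have "thop n Q (thop n Q \<omega>) S = (\<Sum>l=1..n. \<Sum>l'=1..n. G l l')" .
  moreover have "(\<Sum>l=1..n. \<Sum>l'=1..n. G l l') = - (\<Sum>l=1..n. \<Sum>l'=1..n. G l l')"
  proof -
    have "(\<Sum>l=1..n. \<Sum>l'=1..n. G l l') = (\<Sum>l'=1..n. \<Sum>l=1..n. G l l')" by (rule sum.swap)
    also have "\<dots> = (\<Sum>l'=1..n. \<Sum>l=1..n. - G l' l)" by (intro sum.cong refl) (rule anti)
    also have "\<dots> = - (\<Sum>l=1..n. \<Sum>l'=1..n. G l l')" by (simp add: sum_negf)
    finally show ?thesis .
  qed
  ultimately show "thop n Q (thop n Q \<omega>) S = 0 S" by simp
qed

lemma four_comm: "(xderiv a1 ^^ e1) ((xderiv a2 ^^ e2) ((xderiv a3 ^^ e3) ((xderiv a4 ^^ e4) p))) =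
   (xderiv a3 ^^ e3) ((xderiv a4 ^^ e4) ((xderiv a1 ^^ e1) ((xderiv a2 ^^ e2) p)))"
proof -
  have "(xderiv a1 ^^ e1) ((xderiv a2 ^^ e2) ((xderiv a3 ^^ e3) ((xderiv a4 ^^ e4) p))) =
     diffop (X a1 ^ e1 * (X a2 ^ e2 * (X a3 ^ e3 * X a4 ^ e4))) p"
    by (simp only: diffop_mult diffop_X_pow)
  also have "X a1 ^ e1 * (X a2 ^ e2 * (X a3 ^ e3 * X a4 ^ e4)) = X a3 ^ e3 * (X a4 ^ e4 * (X a1 ^ e1 * X a2 ^ e2))"
    by (simp only: mult_ac)
  also have "diffop (X a3 ^ e3 * (X a4 ^ e4 * (X a1 ^ e1 * X a2 ^ e2))) p =
     (xderiv a3 ^^ e3) ((xderiv a4 ^^ e4) ((xderiv a1 ^^ e1) ((xderiv a2 ^^ e2) p)))"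
    by (simp only: diffop_mult diffop_X_pow)
  finally show ?thesis .
qed

lemma Hq_Hq_comm: "Hq n c l (Hq n c l' p) = Hq n c l' (Hq n c l p)"
proof -
  have "Hq n c l (Hq n c l' p) = (\<Sum>a\<le>c. \<Sum>b\<le>c. (xderiv n ^^ (c - a)) ((xderiv l ^^ a) ((xderiv n ^^ (c - b)) ((xderiv l' ^^ b) p))))"
    by (simp add: Hq_def addf_sum[OF addf_xderiv_pow])
  also have "\<dots> = (\<Sum>b\<le>c. \<Sum>a\<le>c. (xderiv n ^^ (c - b)) ((xderiv l' ^^ b) ((xderiv n ^^ (c - a)) ((xderiv l ^^ a) p))))"
    by (subst sum.swap) (intro sum.cong refl, rule four_comm)
  also have "\<dots> = Hq n c l' (Hq n c l p)"
    by (simp add: Hq_def addf_sum[OF addf_xderiv_pow])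
  finally show ?thesis .
qed

lemma Gop_Gop: "Gop n c (Gop n c \<omega>) = 0"
  unfolding Gop_def by (rule thop_thop_zero[OF addf_Hq Hq_Hq_comm])

lemma of_x_apply: "of_x p T = (if T = {} then p else 0)" by (simp add: of_x_def)

lemma thop_of_x_zero:
  assumes "\<And>l. l \<in> {1..n} \<Longrightarrow> Q l p = 0" "\<And>l. addf (Q l)"
  shows "thop n Q (of_x p) = 0"
proof (rule ext)
  fix S
  have "theta_mul l (\<lambda>T. Q l (of_x p T)) S = 0" if "l \<in> {1..n}" for l
  proof -
    have "(\<lambda>T. Q l (of_x p T)) = (\<lambda>T. 0)"
      using assms(1)[OF that] addf_0[OF assms(2)] by (auto simp: of_x_apply)
    thus ?thesis by (simp add: theta_mul_zero)
  qed
  thus "thop n Q (of_x p) S = 0 S" by (simp add: thop_def)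
qed

lemma factB: assumes "n \<ge> 1" shows "(dn n ^^ n) (of_x (Delta n)) = 0"
proof (rule ext)
  fix S
  show "(dn n ^^ n) (of_x (Delta n)) S = 0 S"
    using xderiv_n_n[OF assms K_Delta] addf_0[OF addf_xderiv_pow]
    by (simp add: dn_pow of_x_apply)
qed

lemma factA: assumes n: "n \<ge> 2" and e: "e \<ge> 1"
  shows "(dn n ^^ e) (Gop n (n-1) (of_x (Delta n))) = 0"
  unfolding Gop_def dn_pow_thop
proof (rule thop_of_x_zero)
  fix l assume l: "l \<in> {1..n}"
  show "(xderiv n ^^ e) (Hq n (n - 1) l (Delta n)) = 0"
  proof (cases "l = n")
    case False
    hence "l \<in> {1..n-1}" using l by auto
    hence "Hq n (n - 1) l (Delta n) = 0"
      unfolding Hq_def by (rule hsum_zero[OF n _ K_Delta])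
    thus ?thesis by (simp add: addf_0[OF addf_xderiv_pow])
  next
    case True
    have z: "(xderiv n ^^ n) (Delta n) = 0" using xderiv_n_n[OF _ K_Delta] n by simp
    have "(xderiv n ^^ e) ((xderiv n ^^ (n - 1 - a)) ((xderiv n ^^ a) (Delta n))) = 0" if "a \<le> n - 1" for a
    proof -
      have "(xderiv n ^^ e) ((xderiv n ^^ (n - 1 - a)) ((xderiv n ^^ a) (Delta n))) =
          (xderiv n ^^ (e + (n - 1 - a) + a)) (Delta n)"
        by (simp add: funpow_add)
      also have "e + (n - 1 - a) + a = (e - 1) + n" using that e n by simp
      also have "(xderiv n ^^ ((e - 1) + n)) (Delta n) = 0"
        by (simp only: funpow_add comp_apply z addf_0[OF addf_xderiv_pow])
      finally show ?thesis .
    qed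
    thus ?thesis using True
      by (simp add: Hq_def addf_sum[OF addf_xderiv_pow])
  qed
next
  fix l show "addf (\<lambda>p. (xderiv n ^^ e) (Hq n (n - 1) l p))"
    by (rule addf_comp[OF addf_xderiv_pow addf_Hq])
qed

definition Dsum :: "nat \<Rightarrow> nat \<Rightarrow> nat \<Rightarrow> spoly \<Rightarrow> spoly" where
  "Dsum n lo hi \<omega> = (\<Sum>j\<in>{lo..hi}. (dn n ^^ (hi - j)) (dop n j \<omega>))"

lemma Dsum_G:
  assumes "1 \<le> lo" "lo \<le> hi + 1"
  shows "Dsum n lo hi \<omega> = Gop n hi \<omega> - (dn n ^^ (hi + 1 - lo)) (Gop n (lo - 1) \<omega>)"
proof -
  have split: "{..hi} = {..lo-1} \<union> {lo..hi}" and disj: "{..lo-1} \<inter> {lo..hi} = {}" using assms by auto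
  have "Gop n hi \<omega> = (\<Sum>a\<in>{..lo-1}. (dn n ^^ (hi - a)) (dop n a \<omega>)) + Dsum n lo hi \<omega>"
    unfolding Gop_sum Dsum_def split by (rule sum.union_disjoint) (use disj in auto)
  moreover have "(\<Sum>a\<in>{..lo-1}. (dn n ^^ (hi - a)) (dop n a \<omega>)) = (dn n ^^ (hi + 1 - lo)) (Gop n (lo - 1) \<omega>)"
  proof -
    have "(\<Sum>a\<in>{..lo-1}. (dn n ^^ (hi - a)) (dop n a \<omega>)) =
        (\<Sum>a\<in>{..lo-1}. (dn n ^^ (hi + 1 - lo)) ((dn n ^^ (lo - 1 - a)) (dop n a \<omega>)))"
    proof (rule sum.cong[OF refl])
      fix a assume "a \<in> {..lo-1}"
      hence "hi - a = (hi + 1 - lo) + (lo - 1 - a)" using assms by auto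
      thus "(dn n ^^ (hi - a)) (dop n a \<omega>) = (dn n ^^ (hi + 1 - lo)) ((dn n ^^ (lo - 1 - a)) (dop n a \<omega>))"
        by (simp add: funpow_add)
    qed
    also have "\<dots> = (dn n ^^ (hi + 1 - lo)) (Gop n (lo - 1) \<omega>)"
      by (simp add: Gop_sum addf_sum[OF addf_dn_pow])
    finally show ?thesis .
  qed
  ultimately show ?thesis by (simp add: algebra_simps)
qed

definition ii :: "nat \<Rightarrow> (nat \<Rightarrow> nat) \<Rightarrow> nat \<Rightarrow> nat \<Rightarrow> nat" where
  "ii n i k t = (if t \<le> k then i t else n)"

definition chain :: "nat \<Rightarrow> (nat \<Rightarrow> nat) \<Rightarrow> nat \<Rightarrow> nat \<Rightarrow> spoly \<Rightarrow> spoly" where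
  "chain n i k t \<omega> = foldr (\<lambda>s w. Dsum n (ii n i k s) (ii n i k (Suc s) - 1) w) [t..<Suc k] \<omega>"

lemma chain_last: "chain n i k (Suc k) \<omega> = \<omega>"
  by (simp add: chain_def)

lemma chain_step: "t \<le> k \<Longrightarrow> chain n i k t \<omega> = Dsum n (ii n i k t) (ii n i k (Suc t) - 1) (chain n i k (Suc t) \<omega>)"
  unfolding chain_def by (subst upt_conv_Cons) simp_all

locale ctx =
  fixes n k :: nat and i :: "nat \<Rightarrow> nat"
  assumes n2: "n \<ge> 2" and k1: "k \<ge> 1"
    and sm: "strict_mono_on {1..k} i" and i1: "1 \<le> i 1" and ik: "i k \<le> n - 1"
begin

lemma ii_pos: "t \<in> {1..Suc k} \<Longrightarrow> 1 \<le> ii n i k t"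
proof -
  assume t: "t \<in> {1..Suc k}"
  show ?thesis
  proof (cases "t \<le> k")
    case True
    have "i 1 \<le> i t" using True t k1 strict_mono_on_leD[OF sm, of 1 t] by auto
    thus ?thesis using True i1 by (simp add: ii_def)
  next
    case False thus ?thesis using n2 by (simp add: ii_def)
  qed
qed

lemma ii_lt: "t \<in> {1..k} \<Longrightarrow> ii n i k t < ii n i k (Suc t)"
proof -
  assume t: "t \<in> {1..k}"
  show ?thesis
  proof (cases "Suc t \<le> k")
    case True thus ?thesis using t strict_mono_onD[OF sm, of t "Suc t"] by (simp add: ii_def)
  next
    case False
    hence "t = k" using t by simp
    thus ?thesis using ik n2 by (simp add: ii_def)
  qed
qed

lemma ii_last: "ii n i k (Suc k) = n" by (simp add: ii_def)

abbreviation "Dt \<equiv> of_x (Delta n)"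

lemma C_lemma: "t \<in> {1..Suc k} \<Longrightarrow> e \<ge> 1 \<Longrightarrow> (dn n ^^ e) (Gop n (ii n i k t - 1) (chain n i k t Dt)) = 0"
proof (induction "Suc k - t" arbitrary: t e)
  case 0
  hence t: "t = Suc k" by simp
  show ?case using factA[OF n2 "0.prems"(2)] by (simp add: t chain_last ii_last)
next
  case (Suc d)
  hence t: "t \<in> {1..k}" by auto
  let ?lo = "ii n i k t" and ?hi = "ii n i k (Suc t) - 1"
  let ?\<Phi> = "chain n i k (Suc t) Dt"
  have lo: "1 \<le> ?lo" using ii_pos t by auto
  have hi: "?lo \<le> ?hi + 1" using ii_lt[OF t] by simp
  have IH: "(dn n ^^ e') (Gop n ?hi ?\<Phi>) = 0" if "e' \<ge> 1" for e'
    using Suc.hyps(1)[of "Suc t" e'] Suc.hyps(2) t that by auto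
  have ch: "chain n i k t Dt = Gop n ?hi ?\<Phi> - (dn n ^^ (?hi + 1 - ?lo)) (Gop n (?lo - 1) ?\<Phi>)"
    using chain_step[of t k n i Dt] t Dsum_G[OF lo hi] by simp
  have z1: "Gop n (?lo - 1) ((dn n ^^ (?hi + 1 - ?lo)) (Gop n (?lo - 1) ?\<Phi>)) = 0"
    by (simp add: dn_pow_Gop_comm[symmetric] Gop_Gop addf_0[OF addf_dn_pow])
  have z2: "(dn n ^^ e) (Gop n (?lo - 1) (Gop n ?hi ?\<Phi>)) = 0"
  proof -
    have "(dn n ^^ e) (Gop n (?lo - 1) (Gop n ?hi ?\<Phi>)) = Gop n (?lo - 1) ((dn n ^^ e) (Gop n ?hi ?\<Phi>))"
      by (rule dn_pow_Gop_comm)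
    also have "\<dots> = 0" by (simp only: IH[OF Suc.prems(2)] addf_0[OF addf_Gop])
    finally show ?thesis .
  qed
  show ?case unfolding ch
    by (simp only: addf_diff[OF addf_Gop] z1 diff_zero z2)
qed

lemma M_lemma: "t \<in> {1..Suc k} \<Longrightarrow> (dn n ^^ ii n i k t) (chain n i k t Dt) = 0"
proof (induction "Suc k - t" arbitrary: t)
  case 0
  hence t: "t = Suc k" by simp
  show ?case using factB n2 by (simp add: t chain_last ii_last)
next
  case (Suc d)
  hence t: "t \<in> {1..k}" by auto
  let ?lo = "ii n i k t" and ?hi = "ii n i k (Suc t) - 1"
  let ?\<Phi> = "chain n i k (Suc t) Dt"
  have lo: "1 \<le> ?lo" using ii_pos t by auto
  have hi: "?lo \<le> ?hi + 1" using ii_lt[OF t] by simp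
  have IH: "(dn n ^^ ii n i k (Suc t)) ?\<Phi> = 0"
    using Suc.hyps(1)[of "Suc t"] Suc.hyps(2) t by auto
  have ch: "chain n i k t Dt = Gop n ?hi ?\<Phi> - (dn n ^^ (?hi + 1 - ?lo)) (Gop n (?lo - 1) ?\<Phi>)"
    using chain_step[of t k n i Dt] t Dsum_G[OF lo hi] by simp
  have z1: "(dn n ^^ ?lo) (Gop n ?hi ?\<Phi>) = 0"
    using C_lemma[of "Suc t" ?lo] t lo by simp
  have ex: "?lo + (?hi + 1 - ?lo) = ii n i k (Suc t)" using ii_lt[OF t] by simp
  have z2: "(dn n ^^ ?lo) ((dn n ^^ (?hi + 1 - ?lo)) (Gop n (?lo - 1) ?\<Phi>)) = 0"
  proof -
    have "(dn n ^^ ?lo) ((dn n ^^ (?hi + 1 - ?lo)) (Gop n (?lo - 1) ?\<Phi>)) =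
        (dn n ^^ (?lo + (?hi + 1 - ?lo))) (Gop n (?lo - 1) ?\<Phi>)"
      by (simp add: funpow_add)
    also have "\<dots> = Gop n (?lo - 1) ((dn n ^^ ii n i k (Suc t)) ?\<Phi>)"
      by (simp only: ex dn_pow_Gop_comm)
    also have "\<dots> = 0" by (simp add: IH addf_0[OF addf_Gop])
    finally show ?thesis .
  qed
  show ?case unfolding ch
    by (simp only: addf_diff[OF addf_dn_pow] z1 z2 diff_zero)
qed

end

definition Box :: "nat \<Rightarrow> (nat \<Rightarrow> nat) \<Rightarrow> (nat \<Rightarrow> nat) \<Rightarrow> (nat \<Rightarrow> nat) set" where
  "Box k lo hi = {j. (\<forall>t\<in>{1..k}. lo t \<le> j t \<and> j t \<le> hi t) \<and> (\<forall>t. t \<notin> {1..k} \<longrightarrow> j t = 0)}"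

lemma dops_Suc: "dops n j (Suc k) \<omega> = dops n j k (dop n (j (Suc k)) \<omega>)"
  by (simp add: dops_def)

lemma dops_cong: "(\<And>t. t \<in> {1..k} \<Longrightarrow> j t = j' t) \<Longrightarrow> dops n j k \<omega> = dops n j' k \<omega>"
  unfolding dops_def by (rule foldr_cong) auto

lemma dn_pow_foldr_dop: "(dn v ^^ e) (foldr (\<lambda>t w. dop n (j t) w) L \<omega>) = foldr (\<lambda>t w. dop n (j t) w) L ((dn v ^^ e) \<omega>)"
  by (induction L) (simp_all add: dn_pow_dop_comm)

lemma dn_pow_dops: "(dn v ^^ e) (dops n j k \<omega>) = dops n j k ((dn v ^^ e) \<omega>)"
  unfolding dops_def by (rule dn_pow_foldr_dop)

lemma addf_dops: "addf (dops n j k)"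
proof -
  have "addf (\<lambda>\<omega>. foldr (\<lambda>t w. dop n (j t) w) [1..<k+1] \<omega>)"
    by (rule addf_foldr) (rule addf_dop)
  thus ?thesis unfolding dops_def[abs_def] by simp
qed

lemma Box_0: "Box 0 lo hi = {\<lambda>_. 0}"
  by (auto simp: Box_def)

lemma box_sum:
  "(\<Sum>j\<in>Box k lo hi. (dn n ^^ (\<Sum>t\<in>{1..k}. hi t - j t)) (dops n j k \<omega>)) =
     foldr (\<lambda>t w. Dsum n (lo t) (hi t) w) [1..<Suc k] \<omega>"
proof (induction k arbitrary: \<omega>)
  case 0 thus ?case by (simp add: Box_0 dops_def)
next
  case (Suc k)
  let ?I = "{lo (Suc k)..hi (Suc k)}"
  let ?F = "\<lambda>j. (dn n ^^ (\<Sum>t\<in>{1..Suc k}. hi t - j t)) (dops n j (Suc k) \<omega>)"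
  let ?A = "\<lambda>j. \<Sum>t\<in>{1..k}. hi t - j t"
  have reidx: "(\<Sum>j\<in>Box (Suc k) lo hi. ?F j) = (\<Sum>p\<in>Box k lo hi \<times> ?I. ?F ((fst p)(Suc k := snd p)))"
    by (rule sum.reindex_bij_witness[where j="\<lambda>j. (j(Suc k := 0), j (Suc k))" and i="\<lambda>p. (fst p)(Suc k := snd p)"])
      (auto simp: Box_def fun_eq_iff)
  have hterm: "?F (j'(Suc k := x)) = (dn n ^^ ?A j') (dops n j' k ((dn n ^^ (hi (Suc k) - x)) (dop n x \<omega>)))"
    if "j' \<in> Box k lo hi" for j' x
  proof -
    have e1: "(\<Sum>t\<in>{1..Suc k}. hi t - (j'(Suc k := x)) t) = ?A j' + (hi (Suc k) - x)"
    proof -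
      have "{1..Suc k} = insert (Suc k) {1..k}" by auto
      moreover have "(\<Sum>t\<in>{1..k}. hi t - (j'(Suc k := x)) t) = ?A j'" by (rule sum.cong) auto
      ultimately show ?thesis by simp
    qed
    have e2: "dops n (j'(Suc k := x)) (Suc k) \<omega> = dops n j' k (dop n x \<omega>)"
      by (simp add: dops_Suc) (rule dops_cong, simp)
    show ?thesis
      by (simp only: e1 e2 funpow_add comp_apply dn_pow_dops[where e="hi (Suc k) - x"])
  qed
  have "(\<Sum>j\<in>Box (Suc k) lo hi. ?F j) = (\<Sum>j'\<in>Box k lo hi. \<Sum>x\<in>?I. ?F (j'(Suc k := x)))"
  proof -
    have cp: "(\<Sum>j'\<in>Box k lo hi. \<Sum>x\<in>?I. ?F (j'(Suc k := x))) = (\<Sum>p\<in>Box k lo hi \<times> ?I. ?F ((fst p)(Suc k := snd p)))"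
      by (simp only: sum.cartesian_product split_def)
    show ?thesis by (simp only: reidx cp)
  qed
  also have "\<dots> = (\<Sum>j'\<in>Box k lo hi. (dn n ^^ ?A j') (dops n j' k (Dsum n (lo (Suc k)) (hi (Suc k)) \<omega>)))"
  proof (rule sum.cong[OF refl])
    fix j' assume j': "j' \<in> Box k lo hi"
    have "(\<Sum>x\<in>?I. ?F (j'(Suc k := x))) = (\<Sum>x\<in>?I. (dn n ^^ ?A j') (dops n j' k ((dn n ^^ (hi (Suc k) - x)) (dop n x \<omega>))))"
      by (rule sum.cong[OF refl]) (rule hterm[OF j'])
    also have "\<dots> = (dn n ^^ ?A j') (dops n j' k (Dsum n (lo (Suc k)) (hi (Suc k)) \<omega>))"
      unfolding Dsum_def
      by (simp only: addf_sum[OF addf_comp[OF addf_dn_pow addf_dops]])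
    finally show "(\<Sum>x\<in>?I. ?F (j'(Suc k := x))) = (dn n ^^ ?A j') (dops n j' k (Dsum n (lo (Suc k)) (hi (Suc k)) \<omega>))" .
  qed
  also have "\<dots> = foldr (\<lambda>t w. Dsum n (lo t) (hi t) w) [1..<Suc k] (Dsum n (lo (Suc k)) (hi (Suc k)) \<omega>)"
    by (rule Suc.IH)
  also have "\<dots> = foldr (\<lambda>t w. Dsum n (lo t) (hi t) w) [1..<Suc (Suc k)] \<omega>"
    by simp
  finally show ?case .
qed

lemma Kp_theta_mul: "(\<And>T. Kp A (\<omega> T)) \<Longrightarrow> Kp A (theta_mul l \<omega> S)"
  by (simp add: theta_mul_def Kp_sign Kp_zero)

lemma Kp_dop: "(\<And>T. Kp A (\<omega> T)) \<Longrightarrow> Kp A (dop n a \<omega> S)"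
  unfolding dop_def by (intro Kp_sum Kp_theta_mul Kp_xderiv_pow)

lemma Kp_foldr_dop: "(\<And>T. Kp A (\<omega> T)) \<Longrightarrow> Kp A (foldr (\<lambda>t w. dop n (j t) w) L \<omega> S)"
proof (induction L arbitrary: S)
  case Nil thus ?case by simp
next
  case (Cons a L)
  show ?case using Cons by (simp add: Kp_dop)
qed

lemma Kp_dops: "(\<And>T. Kp A (\<omega> T)) \<Longrightarrow> Kp A (dops n j k \<omega> S)"
  unfolding dops_def by (rule Kp_foldr_dop)

lemma Kp_of_x_Delta: "Kp {1..n} (of_x (Delta n) T)"
  using K_Delta[of n] by (simp add: of_x_apply Kp_zero)

lemma tele: "(\<And>t. t \<in> {1..K} \<Longrightarrow> f t < f (Suc t)) \<Longrightarrow>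
    (\<Sum>t\<in>{1..K}. f (Suc t) - 1 - f t) + K + f 1 = (f (Suc K) :: nat)"
proof (induction K)
  case 0 thus ?case by simp
next
  case (Suc K)
  have IH: "(\<Sum>t\<in>{1..K}. f (Suc t) - 1 - f t) + K + f 1 = f (Suc K)"
    using Suc by auto
  have "f (Suc K) < f (Suc (Suc K))" using Suc.prems[of "Suc K"] by simp
  thus ?case using IH by simp
qed

context ctx begin

lemma interlacing_Box: "interlacing n k i = Box k i (\<lambda>t. ii n i k (Suc t) - 1)"
proof (rule set_eqI)
  fix j
  have pos: "1 \<le> i (Suc t)" if "t \<in> {1..<k}" for t
    using ii_pos[of "Suc t"] that by (simp add: ii_def)
  show "j \<in> interlacing n k i \<longleftrightarrow> j \<in> Box k i (\<lambda>t. ii n i k (Suc t) - 1)"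
  proof
    assume j: "j \<in> interlacing n k i"
    have "j t \<le> ii n i k (Suc t) - 1" if "t \<in> {1..k}" for t
    proof (cases "t < k")
      case True
      hence "t \<in> {1..<k}" using that by auto
      hence "j t < i (t+1)" using j unfolding interlacing_def by blast
      thus ?thesis using True by (simp add: ii_def)
    next
      case False hence "t = k" using that by simp
      thus ?thesis using j by (auto simp: interlacing_def ii_def)
    qed
    thus "j \<in> Box k i (\<lambda>t. ii n i k (Suc t) - 1)" using j by (auto simp: interlacing_def Box_def)
  next
    assume j: "j \<in> Box k i (\<lambda>t. ii n i k (Suc t) - 1)"
    have a: "j t < i (t+1)" if "t \<in> {1..<k}" for t
    proof -
      have "t \<in> {1..k}" using that by auto
      hence "j t \<le> ii n i k (Suc t) - 1" using j unfolding Box_def by blast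
      moreover have "ii n i k (Suc t) = i (Suc t)" using that by (simp add: ii_def)
      ultimately show ?thesis using pos[OF that] by simp
    qed
    have b: "j k < n"
    proof -
      have "k \<in> {1..k}" using k1 by auto
      hence "j k \<le> ii n i k (Suc k) - 1" using j unfolding Box_def by blast
      thus ?thesis using n2 by (simp add: ii_last)
    qed
    show "j \<in> interlacing n k i" using j a b by (auto simp: interlacing_def Box_def)
  qed
qed

lemma d_bound:
  assumes j: "j \<in> Box k i (\<lambda>t. ii n i k (Suc t) - 1)"
  shows "(\<Sum>t=1..k. j t - i t) + (\<Sum>t\<in>{1..k}. (ii n i k (Suc t) - 1) - j t) + k + i 1 = n"
proof -
  have "(\<Sum>t=1..k. j t - i t) + (\<Sum>t\<in>{1..k}. (ii n i k (Suc t) - 1) - j t) =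
      (\<Sum>t\<in>{1..k}. ii n i k (Suc t) - 1 - ii n i k t)"
    unfolding sum.distrib[symmetric]
  proof (rule sum.cong[OF refl])
    fix t assume t: "t \<in> {1..k}"
    hence "i t \<le> j t" "j t \<le> ii n i k (Suc t) - 1" using j by (auto simp: Box_def)
    moreover have "ii n i k t = i t" using t by (simp add: ii_def)
    ultimately show "j t - i t + (ii n i k (Suc t) - 1 - j t) = ii n i k (Suc t) - 1 - ii n i k t" by simp
  qed
  moreover have "(\<Sum>t\<in>{1..k}. ii n i k (Suc t) - 1 - ii n i k t) + k + ii n i k 1 = ii n i k (Suc k)"
    by (rule tele) (rule ii_lt)
  moreover have "ii n i k 1 = i 1" using k1 by (simp add: ii_def)
  ultimately show ?thesis by (simp add: ii_last)
qed

lemma main_sum: "(\<Sum>j\<in>interlacing n k i.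
      (dn n ^^ i 1) ((dn n ^^ (\<Sum>t\<in>{1..k}. (ii n i k (Suc t) - 1) - j t)) (dops n j k Dt))) = 0"
proof -
  have "(\<Sum>j\<in>interlacing n k i. (dn n ^^ (\<Sum>t\<in>{1..k}. (ii n i k (Suc t) - 1) - j t)) (dops n j k Dt))
      = foldr (\<lambda>t w. Dsum n (i t) (ii n i k (Suc t) - 1) w) [1..<Suc k] Dt"
    unfolding interlacing_Box by (rule box_sum)
  also have "\<dots> = chain n i k 1 Dt"
    unfolding chain_def by (rule foldr_cong) (auto simp: ii_def)
  finally have e: "(\<Sum>j\<in>interlacing n k i. (dn n ^^ (\<Sum>t\<in>{1..k}. (ii n i k (Suc t) - 1) - j t)) (dops n j k Dt))
      = chain n i k 1 Dt" .
  have "(\<Sum>j\<in>interlacing n k i.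
      (dn n ^^ i 1) ((dn n ^^ (\<Sum>t\<in>{1..k}. (ii n i k (Suc t) - 1) - j t)) (dops n j k Dt)))
      = (dn n ^^ i 1) (chain n i k 1 Dt)"
    by (simp only: addf_sum[OF addf_dn_pow, symmetric] e)
  also have "\<dots> = 0" using M_lemma[of 1] k1 by (simp add: ii_def)
  finally show ?thesis .
qed

end

theorem theorem1p9:
  fixes n k :: nat and i :: "nat \<Rightarrow> nat"
  assumes "n \<ge> 2" and "k \<ge> 1"
    and "strict_mono_on {1..k} i" and "1 \<le> i 1" and "i k \<le> n - 1"
  shows "\<forall>S. (\<Sum>j\<in>interlacing n k i.
            (-1) ^ (\<Sum>t=1..k. j t - i t) *
            sdiffop (esym (int n - int k - int (\<Sum>t=1..k. j t - i t)) (n - 1))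
                    (dops n j k (of_x (Delta n))) S) = 0"
proof
  fix S
  interpret ctx n k i using assms by unfold_locales
  define A where "A j = (\<Sum>t\<in>{1..k}. (ii n i k (Suc t) - 1) - j t)" for j
  define d where "d j = (\<Sum>t=1..k. j t - i t)" for j
  have tm: "(-1) ^ d j * sdiffop (esym (int n - int k - int (d j)) (n - 1)) (dops n j k (of_x (Delta n))) S
      = (-1) ^ (n - k) * ((dn n ^^ i 1) ((dn n ^^ A j) (dops n j k (of_x (Delta n))))) S"
    if j: "j \<in> interlacing n k i" for j
  proof -
    have bd: "d j + A j + k + i 1 = n" using d_bound[of j] j by (simp add: interlacing_Box d_def A_def)
    hence nk: "n - k - d j = i 1 + A j" and le: "d j \<le> n - k" by auto
    have e1: "esym (int n - int k - int (d j)) (n - 1) = esymS (n - k - d j) {1..n-1}"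
      using bd by (simp add: esym_eq nat_diff_distrib)
    have K: "Kp {1..n} (dops n j k (of_x (Delta n)) S)" by (rule Kp_dops) (rule Kp_of_x_Delta)
    have "sdiffop (esym (int n - int k - int (d j)) (n - 1)) (dops n j k (of_x (Delta n))) S
        = (-1) ^ (n - k - d j) * (xderiv n ^^ (n - k - d j)) (dops n j k (of_x (Delta n)) S)"
      unfolding sdiffop_def e1 using red_last[OF _ K] n2 by simp
    also have "(xderiv n ^^ (n - k - d j)) (dops n j k (of_x (Delta n)) S)
        = ((dn n ^^ i 1) ((dn n ^^ A j) (dops n j k (of_x (Delta n))))) S"
      by (simp only: nk dn_pow funpow_add comp_apply)
    finally have "sdiffop (esym (int n - int k - int (d j)) (n - 1)) (dops n j k (of_x (Delta n))) S =
       (-1) ^ (n - k - d j) * ((dn n ^^ i 1) ((dn n ^^ A j) (dops n j k (of_x (Delta n))))) S" .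
    moreover have "(-1::xpoly) ^ d j * (-1) ^ (n - k - d j) = (-1) ^ (n - k)"
    proof -
      have "d j + (n - k - d j) = n - k" using le by simp
      thus ?thesis by (simp only: power_add[symmetric])
    qed
    ultimately show ?thesis by (simp add: mult.assoc[symmetric])
  qed
  have "(\<Sum>j\<in>interlacing n k i. (-1) ^ d j * sdiffop (esym (int n - int k - int (d j)) (n - 1)) (dops n j k (of_x (Delta n))) S)
      = (\<Sum>j\<in>interlacing n k i. (-1) ^ (n - k) * ((dn n ^^ i 1) ((dn n ^^ A j) (dops n j k (of_x (Delta n))))) S)"
    by (rule sum.cong[OF refl]) (rule tm)
  also have "\<dots> = (-1) ^ (n - k) * (\<Sum>j\<in>interlacing n k i. (dn n ^^ i 1) ((dn n ^^ A j) (dops n j k (of_x (Delta n))))) S"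
    by (simp only: sum_distrib_left sum_fun_apply)
  also have "\<dots> = 0" using main_sum by (simp add: A_def)
  finally show "(\<Sum>j\<in>interlacing n k i.
            (-1) ^ (\<Sum>t=1..k. j t - i t) *
            sdiffop (esym (int n - int k - int (\<Sum>t=1..k. j t - i t)) (n - 1))
                    (dops n j k (of_x (Delta n))) S) = 0"
    by (simp only: d_def)
qed

end
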